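(* Let $G$ and $H$ be connected graphs with $|V(G)|\ge 3$ and $|V(H)|\ge 2$, such that at least one of $G$, $H$ is not complete. Then $$rx_3(G[H])\le rx_3(G)+rc(H).$$ In particular, if $\mathrm{diam}(G)=rx_3(G)$ and $H$ is complete, then $rx_3(G[H])=rx_3(G)+rc(H)$.
   Context: The lexicographic product $G[H]$ has vertex set $V(G)\times V(H)$, with $(g_1,h_1)$ and $(g_2,h_2)$ adjacent iff $g_1g_2\in E(G)$, or $g_1=g_2$ and $h_1h_2\in E(H)$. An edge coloring may give adjacent edges the same color. A path (tree) is rainbow if its edges have pairwise distinct colors. The rainbow connection number $rc(H)$ of a connected graph $H$ is the minimum number of colors in an edge coloring such that every two distinct vertices are joined by a rainbow path. For a connected graph on at least $3$ vertices, $rx_3$ is the minimum number of colors in an edge coloring such that every set of $3$ vertices lies in some rainbow tree. $\mathrm{diam}(G)$ is the diameter of $G$. *)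

theory Defs
  imports Main
begin

definition sgraph :: "'a set \<Rightarrow> 'a set set \<Rightarrow> bool" where
  "sgraph V E \<longleftrightarrow> finite V \<and> (\<forall>e\<in>E. \<exists>u v. u \<in> V \<and> v \<in> V \<and> u \<noteq> v \<and> e = {u, v})"

definition is_path :: "'a set \<Rightarrow> 'a set set \<Rightarrow> 'a list \<Rightarrow> bool" where
  "is_path V E xs \<longleftrightarrow> xs \<noteq> [] \<and> distinct xs \<and> set xs \<subseteq> V \<and>
     (\<forall>i. Suc i < length xs \<longrightarrow> {xs ! i, xs ! Suc i} \<in> E)"

definition path_edges :: "'a list \<Rightarrow> 'a set set" where
  "path_edges xs = {{xs ! i, xs ! Suc i} | i. Suc i < length xs}"

definition gconnected :: "'a set \<Rightarrow> 'a set set \<Rightarrow> bool" where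
  "gconnected V E \<longleftrightarrow> V \<noteq> {} \<and>
     (\<forall>u\<in>V. \<forall>v\<in>V. \<exists>xs. is_path V E xs \<and> hd xs = u \<and> last xs = v)"

definition is_cycle :: "'a set \<Rightarrow> 'a set set \<Rightarrow> 'a list \<Rightarrow> bool" where
  "is_cycle V E xs \<longleftrightarrow> length xs \<ge> 3 \<and> is_path V E xs \<and> {last xs, hd xs} \<in> E"

definition is_tree :: "'a set \<Rightarrow> 'a set set \<Rightarrow> bool" where
  "is_tree V E \<longleftrightarrow> sgraph V E \<and> gconnected V E \<and> \<not> (\<exists>xs. is_cycle V E xs)"

definition complete_graph :: "'a set \<Rightarrow> 'a set set \<Rightarrow> bool" where
  "complete_graph V E \<longleftrightarrow> (\<forall>u\<in>V. \<forall>v\<in>V. u \<noteq> v \<longrightarrow> {u, v} \<in> E)"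

definition rc :: "'a set \<Rightarrow> 'a set set \<Rightarrow> nat" where
  "rc V E = (LEAST k. \<exists>c :: 'a set \<Rightarrow> nat. (\<forall>e\<in>E. c e < k) \<and>
     (\<forall>u\<in>V. \<forall>v\<in>V. u \<noteq> v \<longrightarrow>
        (\<exists>xs. is_path V E xs \<and> hd xs = u \<and> last xs = v \<and> inj_on c (path_edges xs))))"

definition rx3 :: "'a set \<Rightarrow> 'a set set \<Rightarrow> nat" where
  "rx3 V E = (LEAST k. \<exists>c :: 'a set \<Rightarrow> nat. (\<forall>e\<in>E. c e < k) \<and>
     (\<forall>S. S \<subseteq> V \<and> card S = 3 \<longrightarrow>
        (\<exists>TV TE. TV \<subseteq> V \<and> TE \<subseteq> E \<and> is_tree TV TE \<and> S \<subseteq> TV \<and> inj_on c TE)))"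

definition gdist :: "'a set \<Rightarrow> 'a set set \<Rightarrow> 'a \<Rightarrow> 'a \<Rightarrow> nat" where
  "gdist V E u v = (LEAST n. \<exists>xs. is_path V E xs \<and> hd xs = u \<and> last xs = v \<and> length xs = Suc n)"

definition diam :: "'a set \<Rightarrow> 'a set set \<Rightarrow> nat" where
  "diam V E = Max {gdist V E u v | u v. u \<in> V \<and> v \<in> V}"

definition lex_edges :: "'a set \<Rightarrow> 'a set set \<Rightarrow> 'b set \<Rightarrow> 'b set set \<Rightarrow> ('a \<times> 'b) set set" where
  "lex_edges VG EG VH EH = {{(g1, h1), (g2, h2)} | g1 h1 g2 h2.
     g1 \<in> VG \<and> g2 \<in> VG \<and> h1 \<in> VH \<and> h2 \<in> VH \<and>
     ({g1, g2} \<in> EG \<or> (g1 = g2 \<and> {h1, h2} \<in> EH))}"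

end

theory Submission
  imports Defs
begin


definition adj :: "'v set set \<Rightarrow> ('v \<times> 'v) set" where
  "adj F = {(u,v). {u,v} \<in> F}"

lemma adj_iff[simp]: "(u,v) \<in> adj F \<longleftrightarrow> {u,v} \<in> F"
  by (simp add: adj_def)

lemma adj_conv: "(adj F)\<inverse> = adj F"
  by (auto simp: adj_def insert_commute)

lemma rtr_sym: "(u,v) \<in> (adj F)\<^sup>* \<Longrightarrow> (v,u) \<in> (adj F)\<^sup>*"
  by (metis adj_conv converseI rtrancl_converse)

lemma adj_mono: "F \<subseteq> F' \<Longrightarrow> adj F \<subseteq> adj F'"
  by (auto simp: adj_def)

lemma rtr_mono: "F \<subseteq> F' \<Longrightarrow> (u,v) \<in> (adj F)\<^sup>* \<Longrightarrow> (u,v) \<in> (adj F')\<^sup>*"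
  by (meson adj_mono rtrancl_mono subsetD)

lemma list_reach_pow:
  assumes "\<forall>i. Suc i < length xs \<longrightarrow> {xs!i, xs!Suc i} \<in> F" "i < length xs"
  shows "(xs!0, xs!i) \<in> (adj F)^^i"
  using assms(2)
proof (induction i)
  case 0 then show ?case by simp
next
  case (Suc i)
  then have "(xs!0, xs!i) \<in> (adj F)^^i" by simp
  moreover have "{xs!i, xs!Suc i} \<in> F" using assms(1) Suc.prems by simp
  ultimately show ?case by auto
qed

lemma list_reach:
  assumes "\<forall>i. Suc i < length xs \<longrightarrow> {xs!i, xs!Suc i} \<in> F" "i < length xs"
  shows "(xs!0, xs!i) \<in> (adj F)\<^sup>*"
  using list_reach_pow[OF assms] relpow_imp_rtrancl by blast

lemma path_edges_in:
  assumes "\<forall>i. Suc i < length xs \<longrightarrow> {xs!i, xs!Suc i} \<in> F"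
  shows "path_edges xs \<subseteq> F"
  using assms by (auto simp: path_edges_def)

lemma path_reach_pe:
  assumes "i < length xs"
  shows "(xs!0, xs!i) \<in> (adj (path_edges xs))\<^sup>*"
  by (rule list_reach[OF _ assms]) (auto simp: path_edges_def)

lemma hd_last_reach_pe:
  assumes "xs \<noteq> []"
  shows "(hd xs, last xs) \<in> (adj (path_edges xs))\<^sup>*"
  using path_reach_pe[of "length xs - 1" xs] assms
  by (simp add: hd_conv_nth last_conv_nth)

lemma relpow_path:
  assumes "(u,v) \<in> (adj F)^^n" "u \<in> V" "\<forall>e\<in>F. e \<subseteq> V"
  shows "\<exists>xs. is_path V F xs \<and> hd xs = u \<and> last xs = v \<and> length xs \<le> Suc n"
  using assms(1)
proof (induction n arbitrary: v)
  case 0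
  then show ?case using assms(2) by (auto simp: is_path_def intro!: exI[of _ "[u]"])
next
  case (Suc n)
  from Suc.prems obtain w where uw: "(u,w) \<in> (adj F)^^n" and wv: "{w,v} \<in> F" by auto
  from Suc.IH[OF uw] obtain xs where xs: "is_path V F xs" "hd xs = u" "last xs = w" "length xs \<le> Suc n" by blast
  have vV: "v \<in> V" using wv assms(3) by auto
  show ?case
  proof (cases "v \<in> set xs")
    case True
    then obtain i where i: "i < length xs" "xs!i = v" by (auto simp: in_set_conv_nth)
    let ?ys = "take (Suc i) xs"
    have "is_path V F ?ys" using xs(1) i unfolding is_path_def
      by (auto dest: in_set_takeD)
    moreover have "hd ?ys = u" using xs i by (simp add: is_path_def)
    moreover have "last ?ys = v" using i by (simp add: take_Suc_conv_app_nth)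
    moreover have "length ?ys \<le> Suc (Suc n)" using xs by simp
    ultimately show ?thesis by blast
  next
    case False
    let ?ys = "xs @ [v]"
    have ne: "xs \<noteq> []" using xs(1) by (simp add: is_path_def)
    have "is_path V F ?ys" unfolding is_path_def
    proof (intro conjI allI impI)
      show "?ys \<noteq> []" by simp
      show "distinct ?ys" using False xs(1) by (simp add: is_path_def)
      show "set ?ys \<subseteq> V" using xs(1) vV by (simp add: is_path_def)
      fix i assume i: "Suc i < length ?ys"
      show "{?ys!i, ?ys!Suc i} \<in> F"
      proof (cases "Suc i < length xs")
        case True then show ?thesis using xs(1) by (simp add: is_path_def nth_append)
      next
        case False
        then have "i = length xs - 1" using i by simp
        then show ?thesis using wv xs(3) ne
          by (simp add: nth_append last_conv_nth)
      qed
    qed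
    moreover have "hd ?ys = u" using xs ne by simp
    moreover have "last ?ys = v" by simp
    moreover have "length ?ys \<le> Suc (Suc n)" using xs by simp
    ultimately show ?thesis by blast
  qed
qed

lemma rtr_path:
  assumes "(u,v) \<in> (adj F)\<^sup>*" "u \<in> V" "\<forall>e\<in>F. e \<subseteq> V"
  shows "\<exists>xs. is_path V F xs \<and> hd xs = u \<and> last xs = v"
  using assms relpow_path rtrancl_power by metis

lemma path_is_reach:
  assumes "is_path V F xs"
  shows "(hd xs, last xs) \<in> (adj F)\<^sup>*"
proof -
  have "(xs!0, xs!(length xs - 1)) \<in> (adj F)\<^sup>*"
    using assms by (intro list_reach) (auto simp: is_path_def)
  then show ?thesis using assms by (simp add: is_path_def hd_conv_nth last_conv_nth)
qed


lemma distinct_edge_idx: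
  assumes "distinct xs" "Suc a < length xs" "Suc b < length xs"
    "{xs!a, xs!Suc a} = {xs!b, xs!Suc b}"
  shows "a = b"
proof -
  have "(xs!a = xs!b \<and> xs!Suc a = xs!Suc b) \<or> (xs!a = xs!Suc b \<and> xs!Suc a = xs!b)"
    using assms(4) by (auto simp: doubleton_eq_iff)
  then show ?thesis
    using assms(1-3) by (auto simp: nth_eq_iff_index_eq)
qed

lemma reach_set_sub:
  assumes "\<forall>e\<in>F. e \<subseteq> V" "r \<in> V" "(r,x) \<in> (adj F)\<^sup>*"
  shows "x \<in> V"
  using assms(3)
proof (induction rule: rtrancl_induct)
  case base then show ?case using assms(2) .
next
  case (step y z) then show ?case using assms(1) by auto
qed

lemma tree_extract:
  assumes finV: "finite V" and Fe: "\<forall>e\<in>F. \<exists>u v. u\<in>V \<and> v\<in>V \<and> u\<noteq>v \<and> e = {u,v}"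
    and r: "r \<in> V" and S: "\<forall>s\<in>S. (r,s) \<in> (adj F)\<^sup>*"
  shows "\<exists>TV TE. TV \<subseteq> V \<and> TE \<subseteq> F \<and> is_tree TV TE \<and> S \<subseteq> TV"
proof -
  define TV where "TV = {x. (r,x) \<in> (adj F)\<^sup>*}"
  have FV: "\<forall>e\<in>F. e \<subseteq> V"
  proof
    fix e assume "e \<in> F"
    then obtain u v where "u\<in>V" "v\<in>V" "e = {u,v}" using Fe by metis
    then show "e \<subseteq> V" by simp
  qed
  have TVV: "TV \<subseteq> V" using reach_set_sub[OF FV r] by (auto simp: TV_def)
  have rTV: "r \<in> TV" by (simp add: TV_def)
  have finTV: "finite TV" using TVV finV finite_subset by blast
  define F0 where "F0 = {e\<in>F. e \<subseteq> TV}"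
  have finF0: "finite F0"
  proof -
    have "F0 \<subseteq> Pow TV" by (auto simp: F0_def)
    then show ?thesis using finTV finite_subset by blast
  qed
  define P where "P TE \<longleftrightarrow> TE \<subseteq> F0 \<and> (\<forall>x\<in>TV. (r,x) \<in> (adj TE)\<^sup>*)" for TE
  have "P F0"
    unfolding P_def
  proof (intro conjI ballI)
    fix x assume "x \<in> TV"
    then have "(r,x) \<in> (adj F)\<^sup>*" by (simp add: TV_def)
    then show "(r,x) \<in> (adj F0)\<^sup>*"
    proof (induction rule: rtrancl_induct)
      case base then show ?case by simp
    next
      case (step y z)
      have "(r,z) \<in> (adj F)\<^sup>*" using step(1,2) by (rule rtrancl_into_rtrancl)
      then have "y \<in> TV" "z \<in> TV" using step by (auto simp: TV_def)
      then have "{y,z} \<in> F0" using step by (auto simp: F0_def)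
      then show ?case using step by (meson adj_iff rtrancl.simps)
    qed
  qed simp
  then obtain TE where TE: "P TE" and minTE: "\<And>TE'. P TE' \<Longrightarrow> card TE \<le> card TE'"
    using ex_has_least_nat[of P F0 card] by blast
  have TEF0: "TE \<subseteq> F0" and reachTE: "\<forall>x\<in>TV. (r,x) \<in> (adj TE)\<^sup>*" using TE by (auto simp: P_def)
  have finTE: "finite TE" using TEF0 finF0 finite_subset by blast
  have TEsub: "\<forall>e\<in>TE. e \<subseteq> TV" using TEF0 by (auto simp: F0_def)
  have sg: "sgraph TV TE"
    unfolding sgraph_def
  proof (intro conjI ballI)
    show "finite TV" by (rule finTV)
    fix e assume "e \<in> TE"
    then have "e \<in> F" "e \<subseteq> TV" using TEF0 by (auto simp: F0_def)
    moreover obtain u v where "u\<in>V" "v\<in>V" "u\<noteq>v" "e = {u,v}" using Fe \<open>e \<in> F\<close> by metis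
    ultimately show "\<exists>u v. u \<in> TV \<and> v \<in> TV \<and> u \<noteq> v \<and> e = {u, v}" by auto
  qed
  have conn: "gconnected TV TE"
    unfolding gconnected_def
  proof (intro conjI ballI)
    show "TV \<noteq> {}" using rTV by blast
    fix u v assume "u \<in> TV" "v \<in> TV"
    then have "(r,u) \<in> (adj TE)\<^sup>*" "(r,v) \<in> (adj TE)\<^sup>*" using reachTE by auto
    then have "(u,r) \<in> (adj TE)\<^sup>*" "(r,v) \<in> (adj TE)\<^sup>*" using rtr_sym by auto
    then have "(u,v) \<in> (adj TE)\<^sup>*" by (rule rtrancl_trans)
    then show "\<exists>xs. is_path TV TE xs \<and> hd xs = u \<and> last xs = v"
      using rtr_path[OF _ \<open>u\<in>TV\<close> TEsub] by blast
  qed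
  have nocyc: "\<not> (\<exists>xs. is_cycle TV TE xs)"
  proof
    assume "\<exists>xs. is_cycle TV TE xs"
    then obtain xs where cyc: "is_cycle TV TE xs" by blast
    define n where "n = length xs"
    have n3: "n \<ge> 3" and pth: "is_path TV TE xs" and e0: "{last xs, hd xs} \<in> TE"
      using cyc by (auto simp: is_cycle_def n_def)
    have dist: "distinct xs" using pth by (simp add: is_path_def)
    have ne: "xs \<noteq> []" using n3 n_def by auto
    define e0 where "e0 = {last xs, hd xs}"
    define TE' where "TE' = TE - {e0}"
    have pe: "\<forall>i. Suc i < length xs \<longrightarrow> {xs!i, xs!Suc i} \<in> TE'"
    proof (intro allI impI)
      fix i assume i: "Suc i < length xs"
      have inTE: "{xs!i, xs!Suc i} \<in> TE" using pth i by (simp add: is_path_def)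
      have "{xs!i, xs!Suc i} \<noteq> e0"
      proof
        assume eq: "{xs!i, xs!Suc i} = e0"
        have l: "last xs = xs!(n-1)" and h: "hd xs = xs!0" using ne by (auto simp: n_def last_conv_nth hd_conv_nth)
        have "(xs!i = xs!(n-1) \<and> xs!Suc i = xs!0) \<or> (xs!i = xs!0 \<and> xs!Suc i = xs!(n-1))"
          using eq l h by (auto simp: e0_def doubleton_eq_iff)
        then show False
        proof
          assume a: "xs!i = xs!(n-1) \<and> xs!Suc i = xs!0"
          have "i = n - 1" using a dist i n3 nth_eq_iff_index_eq[OF dist, of i "n-1"] by (simp add: n_def)
          then show False using i by (simp add: n_def)
        next
          assume a: "xs!i = xs!0 \<and> xs!Suc i = xs!(n-1)"
          have "Suc i = n - 1" using a dist i n3 nth_eq_iff_index_eq[OF dist, of "Suc i" "n-1"] by (simp add: n_def)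
          moreover have "i = 0" using a dist i n3 nth_eq_iff_index_eq[OF dist, of i 0] by (simp add: n_def ne)
          ultimately show False using n3 by simp
        qed
      qed
      then show "{xs!i, xs!Suc i} \<in> TE'" using inTE by (simp add: TE'_def)
    qed
    have hl: "(hd xs, last xs) \<in> (adj TE')\<^sup>*"
      using list_reach[OF pe, of "n - 1"] ne n3 by (simp add: n_def hd_conv_nth last_conv_nth)
    have sub: "adj TE \<subseteq> (adj TE')\<^sup>*"
    proof
      fix p assume "p \<in> adj TE"
      then obtain a b where p: "p = (a,b)" "{a,b} \<in> TE" by (cases p) auto
      show "p \<in> (adj TE')\<^sup>*"
      proof (cases "{a,b} = e0")
        case True
        then have "(a = last xs \<and> b = hd xs) \<or> (a = hd xs \<and> b = last xs)"
          by (auto simp: e0_def doubleton_eq_iff)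
        moreover have "(last xs, hd xs) \<in> (adj TE')\<^sup>*" using hl by (rule rtr_sym)
        ultimately show ?thesis using hl p(1) by auto
      next
        case False then show ?thesis using p by (auto simp: TE'_def)
      qed
    qed
    have "P TE'"
      unfolding P_def
    proof (intro conjI ballI)
      show "TE' \<subseteq> F0" using TEF0 by (auto simp: TE'_def)
      fix x assume "x \<in> TV"
      then have "(r,x) \<in> (adj TE)\<^sup>*" using reachTE by blast
      then show "(r,x) \<in> (adj TE')\<^sup>*"
        using rtrancl_subset_rtrancl[OF sub] by blast
    qed
    then have "card TE \<le> card TE'" by (rule minTE)
    moreover have "card TE' < card TE"
      using finTE e0 unfolding TE'_def e0_def by (meson card_Diff1_less)
    ultimately show False by simp
  qed
  have "is_tree TV TE" using sg conn nocyc by (simp add: is_tree_def)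
  moreover have "TE \<subseteq> F" using TEF0 by (auto simp: F0_def)
  moreover have "S \<subseteq> TV" using S by (auto simp: TV_def)
  ultimately show ?thesis using TVV by blast
qed


lemma card_le_edges:
  assumes finF: "finite F" and reach: "\<forall>x\<in>V. (r,x) \<in> (adj F)\<^sup>*"
  shows "card V \<le> card F + 1"
proof -
  let ?R = "adj F"
  define dist where "dist v = (LEAST n. (v,r) \<in> ?R^^n)" for v
  have ex: "\<exists>n. (v,r) \<in> ?R^^n" if "v \<in> V" for v
    using reach that rtr_sym rtrancl_power by metis
  have dd: "(v,r) \<in> ?R^^(dist v)" if "v \<in> V" for v
    unfolding dist_def using ex[OF that] by (rule LeastI_ex)
  define nxt where "nxt v = (SOME w. (v,w) \<in> ?R \<and> (w,r) \<in> ?R^^(dist v - 1))" for v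
  have nx: "(v, nxt v) \<in> ?R \<and> dist (nxt v) < dist v" if "v \<in> V" "v \<noteq> r" for v
  proof -
    have "dist v \<noteq> 0"
    proof
      assume "dist v = 0"
      then show False using dd[OF that(1)] that(2) by simp
    qed
    then obtain m where m: "dist v = Suc m" using not0_implies_Suc by blast
    then have "\<exists>w. (v,w) \<in> ?R \<and> (w,r) \<in> ?R^^(dist v - 1)"
      using dd[OF that(1)] relpow_Suc_D2 by fastforce
    then have w: "(v, nxt v) \<in> ?R \<and> (nxt v,r) \<in> ?R^^(dist v - 1)"
      unfolding nxt_def by (rule someI_ex)
    then have "dist (nxt v) \<le> dist v - 1" unfolding dist_def by (auto intro: Least_le)
    then show ?thesis using w m by auto
  qed
  define f where "f v = {v, nxt v}" for v
  have "inj_on f (V - {r})"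
  proof (rule inj_onI)
    fix v w assume v: "v \<in> V - {r}" and w: "w \<in> V - {r}" and eq: "f v = f w"
    show "v = w"
    proof (rule ccontr)
      assume "v \<noteq> w"
      then have "v = nxt w \<and> w = nxt v" using eq by (auto simp: f_def doubleton_eq_iff)
      then have "dist v < dist w" "dist w < dist v" using nx[of v] nx[of w] v w by (metis DiffD1 DiffD2 insertI1)+
      then show False by simp
    qed
  qed
  moreover have "f ` (V - {r}) \<subseteq> F"
  proof
    fix e assume "e \<in> f ` (V - {r})"
    then obtain v where "v \<in> V" "v \<noteq> r" "e = f v" by blast
    then show "e \<in> F" using nx[of v] by (simp add: f_def)
  qed
  ultimately have "card (V - {r}) \<le> card F" using finF by (intro card_inj_on_le) auto
  moreover have "card V \<le> card (V - {r}) + 1"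
  proof (cases "finite V \<and> r \<in> V")
    case True then show ?thesis by (simp add: card_Diff_singleton)
  next
    case False then show ?thesis by auto
  qed
  ultimately show ?thesis by linarith
qed


lemma sgraph_sub:
  assumes "sgraph V E" "e \<in> E" shows "e \<subseteq> V"
proof -
  obtain u v where "u \<in> V" "v \<in> V" "e = {u,v}" using assms unfolding sgraph_def by metis
  then show ?thesis by simp
qed

lemma sgraph_finE:
  assumes s: "sgraph V E" shows "finite E"
proof -
  have "E \<subseteq> Pow V" using sgraph_sub[OF s] by blast
  moreover have "finite V" using s by (simp add: sgraph_def)
  ultimately show "finite E" by (meson finite_Pow_iff finite_subset)
qed

lemma conn_reach:
  assumes "gconnected V E" "u \<in> V" "v \<in> V" shows "(u,v) \<in> (adj E)\<^sup>*"
proof -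
  obtain xs where "is_path V E xs" "hd xs = u" "last xs = v" using assms unfolding gconnected_def by metis
  then show ?thesis using path_is_reach by metis
qed

lemma inj_color_exists:
  assumes "finite E" shows "\<exists>(c::'a \<Rightarrow> nat) n. (\<forall>e\<in>E. c e < n) \<and> inj_on c E"
proof -
  obtain f :: "'a \<Rightarrow> nat" and n where f: "f ` E = {i. i < n}" "inj_on f E"
    using finite_imp_inj_to_nat_seg[OF assms] by metis
  have "\<forall>e\<in>E. f e < n" using f(1) by auto
  then show ?thesis using f(2) by (intro exI[of _ f] exI[of _ n]) simp
qed

lemma rx3_wit:
  assumes s: "sgraph V E" and g: "gconnected V E"
  shows "\<exists>c::'a set \<Rightarrow> nat. (\<forall>e\<in>E. c e < rx3 V E) \<and>
     (\<forall>S. S \<subseteq> V \<and> card S = 3 \<longrightarrow>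
        (\<exists>TV TE. TV \<subseteq> V \<and> TE \<subseteq> E \<and> is_tree TV TE \<and> S \<subseteq> TV \<and> inj_on c TE))"
  unfolding rx3_def
proof (rule LeastI_ex)
  obtain c :: "'a set \<Rightarrow> nat" and n where c: "\<forall>e\<in>E. c e < n" "inj_on c E"
    using inj_color_exists[OF sgraph_finE[OF s]] by blast
  have "\<forall>S. S \<subseteq> V \<and> card S = 3 \<longrightarrow>
        (\<exists>TV TE. TV \<subseteq> V \<and> TE \<subseteq> E \<and> is_tree TV TE \<and> S \<subseteq> TV \<and> inj_on c TE)"
  proof (intro allI impI)
    fix S assume S: "S \<subseteq> V \<and> card S = 3"
    then have "S \<noteq> {}" by auto
    then obtain r where r: "r \<in> S" by blast
    have "\<exists>TV TE. TV \<subseteq> V \<and> TE \<subseteq> E \<and> is_tree TV TE \<and> S \<subseteq> TV"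
    proof (rule tree_extract)
      show "finite V" using s by (simp add: sgraph_def)
      show "\<forall>e\<in>E. \<exists>u v. u \<in> V \<and> v \<in> V \<and> u \<noteq> v \<and> e = {u, v}" using s by (simp add: sgraph_def)
      show "r \<in> V" using r S by blast
      show "\<forall>s\<in>S. (r, s) \<in> (adj E)\<^sup>*" using conn_reach[OF g] r S by blast
    qed
    then show "\<exists>TV TE. TV \<subseteq> V \<and> TE \<subseteq> E \<and> is_tree TV TE \<and> S \<subseteq> TV \<and> inj_on c TE"
      using c(2) inj_on_subset by blast
  qed
  then show "\<exists>(k::nat) (c::'a set \<Rightarrow> nat). (\<forall>e\<in>E. c e < k) \<and>
     (\<forall>S. S \<subseteq> V \<and> card S = 3 \<longrightarrow>
        (\<exists>TV TE. TV \<subseteq> V \<and> TE \<subseteq> E \<and> is_tree TV TE \<and> S \<subseteq> TV \<and> inj_on c TE))"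
    using c(1) by (intro exI[of _ n] exI[of _ c]) simp
qed

lemma rc_wit:
  assumes s: "sgraph V E" and g: "gconnected V E"
  shows "\<exists>c::'a set \<Rightarrow> nat. (\<forall>e\<in>E. c e < rc V E) \<and>
     (\<forall>u\<in>V. \<forall>v\<in>V. u \<noteq> v \<longrightarrow>
        (\<exists>xs. is_path V E xs \<and> hd xs = u \<and> last xs = v \<and> inj_on c (path_edges xs)))"
  unfolding rc_def
proof (rule LeastI_ex)
  obtain c :: "'a set \<Rightarrow> nat" and n where c: "\<forall>e\<in>E. c e < n" "inj_on c E"
    using inj_color_exists[OF sgraph_finE[OF s]] by blast
  have "\<forall>u\<in>V. \<forall>v\<in>V. u \<noteq> v \<longrightarrow>
        (\<exists>xs. is_path V E xs \<and> hd xs = u \<and> last xs = v \<and> inj_on c (path_edges xs))"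
  proof (intro ballI impI)
    fix u v assume "u \<in> V" "v \<in> V" "u \<noteq> v"
    then obtain xs where xs: "is_path V E xs" "hd xs = u" "last xs = v" using g by (auto simp: gconnected_def)
    have "path_edges xs \<subseteq> E" using xs(1) by (intro path_edges_in) (simp add: is_path_def)
    then show "\<exists>xs. is_path V E xs \<and> hd xs = u \<and> last xs = v \<and> inj_on c (path_edges xs)"
      using xs c(2) inj_on_subset by blast
  qed
  then show "\<exists>(k::nat) (c::'a set \<Rightarrow> nat). (\<forall>e\<in>E. c e < k) \<and> (\<forall>u\<in>V. \<forall>v\<in>V. u \<noteq> v \<longrightarrow>
        (\<exists>xs. is_path V E xs \<and> hd xs = u \<and> last xs = v \<and> inj_on c (path_edges xs)))"
    using c(1) by (intro exI[of _ n] exI[of _ c]) simp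
qed

lemma rainbow_card:
  assumes "inj_on c TE" "\<forall>e\<in>TE. c e < (k::nat)"
  shows "card TE \<le> k"
proof -
  have "card TE = card (c ` TE)" using assms(1) by (simp add: card_image)
  also have "\<dots> \<le> card {..<k}" using assms(2) by (intro card_mono) auto
  finally show ?thesis by simp
qed

lemma tree_card:
  assumes "is_tree TV TE" "finite TE"
  shows "card TV \<le> card TE + 1"
proof (cases "TV = {}")
  case True then show ?thesis by simp
next
  case False
  then obtain r where r: "r \<in> TV" by blast
  have "gconnected TV TE" using assms by (simp add: is_tree_def)
  then have "\<forall>x\<in>TV. (r,x) \<in> (adj TE)\<^sup>*" using conn_reach r by metis
  then show ?thesis using card_le_edges[OF assms(2)] by blast
qed

lemma rx3_ge2:
  assumes s: "sgraph V E" and g: "gconnected V E" and c3: "card V \<ge> 3"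
  shows "rx3 V E \<ge> 2"
proof -
  obtain c where c: "\<forall>e\<in>E. c e < rx3 V E" and tr: "\<forall>S. S \<subseteq> V \<and> card S = 3 \<longrightarrow>
        (\<exists>TV TE. TV \<subseteq> V \<and> TE \<subseteq> E \<and> is_tree TV TE \<and> S \<subseteq> TV \<and> inj_on c TE)"
    using rx3_wit[OF s g] by blast
  obtain S where S: "S \<subseteq> V" "card S = 3" using obtain_subset_with_card_n[OF c3] by metis
  have "\<exists>TV TE. TV \<subseteq> V \<and> TE \<subseteq> E \<and> is_tree TV TE \<and> S \<subseteq> TV \<and> inj_on c TE"
    using tr S by simp
  then obtain TV TE where T: "TV \<subseteq> V" "TE \<subseteq> E" "is_tree TV TE" "S \<subseteq> TV" "inj_on c TE"
    by blast
  have finE: "finite E" using sgraph_finE[OF s] .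
  have finTE: "finite TE" using T(2) finE finite_subset by blast
  have finV: "finite V" using s by (simp add: sgraph_def)
  have "finite TV" using T(1) finV finite_subset by blast
  then have a: "card S \<le> card TV" using T(4) by (rule card_mono)
  have b: "card TV \<le> card TE + 1" using tree_card[OF T(3) finTE] .
  have d: "card TE \<le> rx3 V E" using T(2) c by (intro rainbow_card[OF T(5)]) auto
  show ?thesis using a b d S(2) by linarith
qed


definition Ccol :: "nat \<Rightarrow> ('a set \<Rightarrow> nat) \<Rightarrow> ('b set \<Rightarrow> nat) \<Rightarrow> ('a \<times> 'b) set \<Rightarrow> nat" where
  "Ccol k c c' e = (if card (fst ` e) = 1 then k + c' (snd ` e)
     else if card (snd ` e) = 1 then (if c (fst ` e) = 0 then 1 else 0) else c (fst ` e))"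

lemma Ccol_fib: "h \<noteq> h' \<Longrightarrow> Ccol k c c' {(g,h),(g,h')} = k + c' {h,h'}"
  by (simp add: Ccol_def)

lemma Ccol_cross: "g \<noteq> g' \<Longrightarrow> h \<noteq> h' \<Longrightarrow> Ccol k c c' {(g,h),(g',h')} = c {g,g'}"
  by (simp add: Ccol_def)

lemma Ccol_vert: "g \<noteq> g' \<Longrightarrow> Ccol k c c' {(g,h),(g',h)} = (if c {g,g'} = 0 then 1 else 0)"
  by (simp add: Ccol_def)

lemma lex_fib: "g \<in> VG \<Longrightarrow> h \<in> VH \<Longrightarrow> h' \<in> VH \<Longrightarrow> {h,h'} \<in> EH \<Longrightarrow>
    {(g,h),(g,h')} \<in> lex_edges VG EG VH EH"
  unfolding lex_edges_def by blast

lemma lex_cross: "g \<in> VG \<Longrightarrow> g' \<in> VG \<Longrightarrow> h \<in> VH \<Longrightarrow> h' \<in> VH \<Longrightarrow> {g,g'} \<in> EG \<Longrightarrow>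
    {(g,h),(g',h')} \<in> lex_edges VG EG VH EH"
  unfolding lex_edges_def by blast

lemma path_edges_zip:
  assumes "length ys = length xs"
  shows "path_edges (zip xs ys) = {{(xs!i, ys!i), (xs!Suc i, ys!Suc i)} | i. Suc i < length xs}"
  unfolding path_edges_def
proof (rule Collect_cong)
  fix e
  show "(\<exists>i. e = {zip xs ys ! i, zip xs ys ! Suc i} \<and> Suc i < length (zip xs ys)) =
     (\<exists>i. e = {(xs!i, ys!i), (xs!Suc i, ys!Suc i)} \<and> Suc i < length xs)"
  proof
    assume "\<exists>i. e = {zip xs ys ! i, zip xs ys ! Suc i} \<and> Suc i < length (zip xs ys)"
    then obtain i where "e = {zip xs ys ! i, zip xs ys ! Suc i}" "Suc i < length (zip xs ys)" by blast
    then show "\<exists>i. e = {(xs!i, ys!i), (xs!Suc i, ys!Suc i)} \<and> Suc i < length xs"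
      using assms nth_zip[of i xs ys] nth_zip[of "Suc i" xs ys] by auto
  next
    assume "\<exists>i. e = {(xs!i, ys!i), (xs!Suc i, ys!Suc i)} \<and> Suc i < length xs"
    then obtain i where "e = {(xs!i, ys!i), (xs!Suc i, ys!Suc i)}" "Suc i < length xs" by blast
    then show "\<exists>i. e = {zip xs ys ! i, zip xs ys ! Suc i} \<and> Suc i < length (zip xs ys)"
      using assms nth_zip[of i xs ys] nth_zip[of "Suc i" xs ys] by (intro exI[of _ i]) auto
  qed
qed

lemma leg_lex:
  assumes p: "is_path VG EG xs" and l: "length ys = length xs" and y: "set ys \<subseteq> VH"
  shows "path_edges (zip xs ys) \<subseteq> lex_edges VG EG VH EH"
proof
  fix e assume "e \<in> path_edges (zip xs ys)"
  then obtain i where i: "Suc i < length xs" "e = {(xs!i, ys!i), (xs!Suc i, ys!Suc i)}"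
    using path_edges_zip[OF l] by auto
  have "xs!i \<in> VG" "xs!Suc i \<in> VG" using p i(1) by (auto simp: is_path_def)
  moreover have "ys!i \<in> set ys" "ys!Suc i \<in> set ys" using i(1) l by simp_all
  then have "ys!i \<in> VH" "ys!Suc i \<in> VH" using y by auto
  moreover have "{xs!i, xs!Suc i} \<in> EG" using p i(1) by (simp add: is_path_def)
  ultimately show "e \<in> lex_edges VG EG VH EH" using i(2) by (simp add: lex_cross)
qed

lemma leg_col:
  assumes p: "is_path VG EG xs" and l: "length ys = length xs"
    and d: "\<forall>i. Suc i < length xs \<longrightarrow> ys!i \<noteq> ys!Suc i"
    and e: "e \<in> path_edges (zip xs ys)"
  shows "fst ` e \<in> path_edges xs \<and> Ccol k c c' e = c (fst ` e)"
proof -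
  obtain i where i: "Suc i < length xs" "e = {(xs!i, ys!i), (xs!Suc i, ys!Suc i)}"
    using e path_edges_zip[OF l] by auto
  have ne: "xs!i \<noteq> xs!Suc i" using p i(1) by (simp add: is_path_def nth_eq_iff_index_eq)
  have fe: "fst ` e = {xs!i, xs!Suc i}" using i(2) by simp
  then have "fst ` e \<in> path_edges xs" using i(1) by (auto simp: path_edges_def)
  moreover have "Ccol k c c' e = c (fst ` e)" using i(2) fe Ccol_cross[OF ne d[rule_format, OF i(1)]] by simp
  ultimately show ?thesis by simp
qed

lemma leg_inj:
  assumes p: "is_path VG EG xs" and l: "length ys = length xs"
    and e1: "e1 \<in> path_edges (zip xs ys)" and e2: "e2 \<in> path_edges (zip xs ys)"
    and eq: "fst ` e1 = fst ` e2"
  shows "e1 = e2"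
proof -
  obtain i where i: "Suc i < length xs" "e1 = {(xs!i, ys!i), (xs!Suc i, ys!Suc i)}"
    using e1 path_edges_zip[OF l] by auto
  obtain j where j: "Suc j < length xs" "e2 = {(xs!j, ys!j), (xs!Suc j, ys!Suc j)}"
    using e2 path_edges_zip[OF l] by auto
  have "{xs!i, xs!Suc i} = {xs!j, xs!Suc j}" using eq i(2) j(2) by simp
  then have "i = j" using distinct_edge_idx[of xs i j] p i(1) j(1) by (simp add: is_path_def)
  then show ?thesis using i j by simp
qed

lemma leg_reach:
  assumes l: "length ys = length xs" and i: "i < length xs"
  shows "((xs!0, ys!0), (xs!i, ys!i)) \<in> (adj (path_edges (zip xs ys)))\<^sup>*"
proof -
  have "zip xs ys ! 0 = (xs!0, ys!0)" "zip xs ys ! i = (xs!i, ys!i)"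
  proof -
    have "0 < length xs" "0 < length ys" "i < length ys" using i l by linarith+
    then show "zip xs ys ! 0 = (xs!0, ys!0)" "zip xs ys ! i = (xs!i, ys!i)"
      using nth_zip[of 0 xs ys] nth_zip[of i xs ys] i by blast+
  qed
  then show ?thesis using path_reach_pe[of i "zip xs ys"] l i by simp
qed

lemma fib_lex:
  assumes p: "is_path VH EH zs" and g: "g \<in> VG"
  shows "path_edges (map (Pair g) zs) \<subseteq> lex_edges VG EG VH EH"
proof
  fix e assume "e \<in> path_edges (map (Pair g) zs)"
  then obtain i where i: "Suc i < length zs" "e = {(g, zs!i), (g, zs!Suc i)}"
    by (auto simp: path_edges_def)
  have "zs!i \<in> VH" "zs!Suc i \<in> VH" "{zs!i, zs!Suc i} \<in> EH" using p i(1) by (auto simp: is_path_def)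
  then show "e \<in> lex_edges VG EG VH EH" using i(2) g by (simp add: lex_fib)
qed

lemma fib_col:
  assumes p: "is_path VH EH zs" and e: "e \<in> path_edges (map (Pair g) zs)"
  shows "snd ` e \<in> path_edges zs \<and> Ccol k c c' e = k + c' (snd ` e) \<and> e = Pair g ` (snd ` e)"
proof -
  obtain i where i: "Suc i < length zs" "e = {(g, zs!i), (g, zs!Suc i)}"
    using e by (auto simp: path_edges_def)
  have ne: "zs!i \<noteq> zs!Suc i" using p i(1) by (simp add: is_path_def nth_eq_iff_index_eq)
  have se: "snd ` e = {zs!i, zs!Suc i}" using i(2) by simp
  then show ?thesis using i ne by (auto simp: path_edges_def Ccol_fib)
qed

lemma fib_reach:
  assumes "zs \<noteq> []"
  shows "((g, hd zs), (g, last zs)) \<in> (adj (path_edges (map (Pair g) zs)))\<^sup>*"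
  using hd_last_reach_pe[of "map (Pair g) zs"] assms by (simp add: hd_map last_map)

lemma fib_rainbow:
  assumes p: "is_path VH EH zs" and inj: "inj_on c' (path_edges zs)"
  shows "inj_on (Ccol k c c') (path_edges (map (Pair g) zs))"
proof (rule inj_onI)
  fix e1 e2 assume e1: "e1 \<in> path_edges (map (Pair g) zs)" and e2: "e2 \<in> path_edges (map (Pair g) zs)"
    and eq: "Ccol k c c' e1 = Ccol k c c' e2"
  note f1 = fib_col[OF p e1, of k c c'] and f2 = fib_col[OF p e2, of k c c']
  have "c' (snd ` e1) = c' (snd ` e2)" using f1 f2 eq by simp
  then have "snd ` e1 = snd ` e2" using inj f1 f2 by (meson inj_onD)
  then show "e1 = e2" using f1 f2 by metis
qed

lemma fib_range: 
  assumes p: "is_path VH EH zs" and e: "e \<in> path_edges (map (Pair g) zs)"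
  shows "Ccol k c c' e \<ge> k"
  using fib_col[OF p e] by simp


definition lab_ok :: "'b set \<Rightarrow> 'b list \<Rightarrow> nat \<Rightarrow> 'b \<Rightarrow> 'b \<Rightarrow> bool" where
  "lab_ok VH ys d s t \<longleftrightarrow> length ys = Suc d \<and> ys!0 = s \<and> ys!d = t \<and> set ys \<subseteq> VH \<and>
     (\<forall>i<d. ys!i \<noteq> ys!Suc i)"

lemma lab_base: "s \<in> VH \<Longrightarrow> lab_ok VH [s] 0 s s"
  by (simp add: lab_ok_def)

lemma lab_cons:
  assumes "lab_ok VH ys d y t" "s \<in> VH" "s \<noteq> y"
  shows "lab_ok VH (s#ys) (Suc d) s t"
  using assms unfolding lab_ok_def
  by (auto simp: nth_Cons split: nat.splits)

lemma other_ex: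
  assumes "card VH \<ge> 2" "s \<in> VH" shows "\<exists>y\<in>VH. y \<noteq> s"
proof (rule ccontr)
  assume "\<not> ?thesis"
  then have "VH \<subseteq> {s}" by blast
  then have "card VH \<le> card {s}" by (intro card_mono) auto
  then have "card VH \<le> 1" by simp
  then show False using assms by simp
qed

lemma lab_any:
  assumes "card VH \<ge> 2" "s \<in> VH" shows "\<exists>t ys. lab_ok VH ys d s t"
  using assms(2)
proof (induction d arbitrary: s)
  case 0 then show ?case by (intro exI[of _ s] exI[of _ "[s]"] lab_base)
next
  case (Suc d)
  obtain y where y: "y \<in> VH" "y \<noteq> s" using other_ex[OF assms(1) Suc.prems] by blast
  obtain t ys where "lab_ok VH ys d y t" using Suc.IH[OF y(1)] by blast
  then show ?case using lab_cons[of VH ys d y t s] Suc.prems y by blast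
qed

lemma lab_two:
  assumes c2: "card VH = 2" and s: "s \<in> VH" and t: "t \<in> VH" and par: "(s = t) = even d"
  shows "\<exists>ys. lab_ok VH ys d s t"
  using s par
proof (induction d arbitrary: s)
  case 0 then show ?case using lab_base by fastforce
next
  case (Suc d)
  obtain y where y: "y \<in> VH" "y \<noteq> s" using other_ex[of VH s] c2 Suc.prems by auto
  have VH: "VH = {s, y}"
  proof -
    have "{s,y} \<subseteq> VH" using y Suc.prems by auto
    moreover have "finite VH" using c2 card.infinite by fastforce
    moreover have "card {s,y} = 2" using y by simp
    ultimately show ?thesis using c2 by (metis card_subset_eq)
  qed
  have "(y = t) = even d"
  proof (cases "t = s")
    case True then show ?thesis using Suc.prems y by auto
  next
    case False
    then have "t = y" using t VH by auto
    then show ?thesis using Suc.prems False by auto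
  qed
  then obtain ys where "lab_ok VH ys d y t" using Suc.IH[OF y(1)] by blast
  then show ?case using lab_cons[of VH ys d y t s] Suc.prems y by blast
qed

lemma avoid2:
  assumes c3: "card VH \<ge> 3" shows "\<exists>y\<in>VH. y \<noteq> p \<and> y \<noteq> q"
proof (rule ccontr)
  assume "\<not> ?thesis"
  then have sub: "VH \<subseteq> {p,q}" by blast
  have "card VH \<le> card {p,q}" by (rule card_mono[OF _ sub]) simp
  also have "\<dots> \<le> 2" by (simp add: card_insert_le_m1)
  finally show False using c3 by simp
qed

lemma lab_three:
  assumes c3: "card VH \<ge> 3" and s: "s \<in> VH" and t: "t \<in> VH"
    and cond: "(d = 0 \<and> s = t) \<or> (d = 1 \<and> s \<noteq> t) \<or> d \<ge> 2"
  shows "\<exists>ys. lab_ok VH ys d s t"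
  using s cond
proof (induction d arbitrary: s rule: less_induct)
  case (less d)
  show ?case
  proof (cases "d = 0")
    case True
    then have "s = t" using less.prems(2) by simp
    then have "lab_ok VH [s] d s t" using True lab_base[OF less.prems(1)] by simp
    then show ?thesis by blast
  next
    case False
    then obtain d' where d': "d = Suc d'" using not0_implies_Suc by blast
    show ?thesis
    proof (cases "d' = 0")
      case True
      then have "s \<noteq> t" using less.prems d' by auto
      then have "lab_ok VH [s,t] (Suc 0) s t" using lab_cons[OF lab_base[OF t] less.prems(1)] by simp
      then show ?thesis using d' True by blast
    next
      case False
      obtain y where y: "y \<in> VH" "y \<noteq> s" "y \<noteq> t" using avoid2[OF c3] by blast
      have "(d' = 0 \<and> y = t) \<or> (d' = 1 \<and> y \<noteq> t) \<or> d' \<ge> 2" using False y by auto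
      moreover have "d' < d" using d' by simp
      ultimately obtain ys where ys: "lab_ok VH ys d' y t" using less.IH[of d' y] y(1) by blast
      have "s \<noteq> y" using y by simp
      then have "lab_ok VH (s#ys) (Suc d') s t" using lab_cons[OF ys less.prems(1)] by simp
      then show ?thesis using d' by blast
    qed
  qed
qed

definition labd where "labd VH d s t \<longleftrightarrow> (\<exists>ys. lab_ok VH ys d s t)"

lemma spider_choice:
  assumes c2: "card VH \<ge> 2" and b: "b1 \<in> VH" "b2 \<in> VH" "b3 \<in> VH"
    and nz: "\<not>(d1 = 0 \<and> d2 = 0)" "\<not>(d1 = 0 \<and> d3 = 0)" "\<not>(d2 = 0 \<and> d3 = 0)"
  shows "\<exists>L\<in>VH. \<exists>z1 z2 z3. labd VH d1 L z1 \<and> labd VH d2 L z2 \<and> labd VH d3 L z3 \<and>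
     ((z1 = b1 \<and> z2 = b2) \<or> (z1 = b1 \<and> z3 = b3) \<or> (z2 = b2 \<and> z3 = b3))"
proof (cases "card VH = 2")
  case True
  have oth: "\<exists>y\<in>VH. y \<noteq> s" if "s \<in> VH" for s using other_ex[OF c2 that] .
  define ot where "ot s = (SOME y. y \<in> VH \<and> y \<noteq> s)" for s
  have ot: "ot s \<in> VH \<and> ot s \<noteq> s" if "s \<in> VH" for s
    unfolding ot_def using oth[OF that] by (metis (mono_tags, lifting) someI_ex)
  define L where "L d b = (if even d then b else ot b)" for d :: nat and b
  have LV: "L d b \<in> VH" if "b \<in> VH" for d b using ot[OF that] that by (simp add: L_def)
  have Lab: "labd VH d (L d b) b" if "b \<in> VH" for d b
    unfolding labd_def
  proof (rule lab_two[OF True LV[OF that] that])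
    show "(L d b = b) = even d" using ot[OF that] by (simp add: L_def)
  qed
  have anyz: "\<exists>z. labd VH d L0 z" if "L0 \<in> VH" for d L0
    using lab_any[OF c2 that] by (auto simp: labd_def)
  have VH: "\<exists>u v. VH = {u,v}" using True by (meson card_2_iff)
  then obtain u v where uv: "VH = {u,v}" by blast
  have "L d1 b1 = L d2 b2 \<or> L d1 b1 = L d3 b3 \<or> L d2 b2 = L d3 b3"
    using LV[OF b(1), of d1] LV[OF b(2), of d2] LV[OF b(3), of d3] uv by auto
  then show ?thesis
  proof (elim disjE)
    assume e: "L d1 b1 = L d2 b2"
    obtain z3 where "labd VH d3 (L d1 b1) z3" using anyz LV b by blast
    then show ?thesis using Lab[OF b(1), of d1] Lab[OF b(2), of d2] e LV[OF b(1)] by metis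
  next
    assume e: "L d1 b1 = L d3 b3"
    obtain z2 where "labd VH d2 (L d1 b1) z2" using anyz LV b by blast
    then show ?thesis using Lab[OF b(1), of d1] Lab[OF b(3), of d3] e LV[OF b(1)] by metis
  next
    assume e: "L d2 b2 = L d3 b3"
    obtain z1 where "labd VH d1 (L d2 b2) z1" using anyz LV b by blast
    then show ?thesis using Lab[OF b(2), of d2] Lab[OF b(3), of d3] e LV[OF b(2)] by metis
  qed
next
  case False
  then have c3: "card VH \<ge> 3" using c2 by simp
  have fin: "finite VH" using c3 card.infinite by fastforce
  have avoid: "\<exists>y\<in>VH. y \<noteq> p \<and> y \<noteq> q" for p q using avoid2[OF c3] .
  have ge1: "labd VH d L0 b" if "d \<ge> 1" "L0 \<noteq> b" "L0 \<in> VH" "b \<in> VH" for d L0 b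
    unfolding labd_def using that by (intro lab_three[OF c3]) auto
  have anyz: "\<exists>z. labd VH d L0 z" if "L0 \<in> VH" for d L0
    using lab_any[OF c2 that] by (auto simp: labd_def)
  show ?thesis
  proof (cases "d1 = 0")
    case True
    obtain L0 where L0: "L0 \<in> VH" "L0 \<noteq> b2" "L0 \<noteq> b3" using avoid by blast
    have "d2 \<ge> 1" "d3 \<ge> 1" using nz True by auto
    then have "labd VH d2 L0 b2" "labd VH d3 L0 b3" using ge1 L0 b by auto
    moreover obtain z1 where "labd VH d1 L0 z1" using anyz L0 by blast
    ultimately show ?thesis using L0(1) by blast
  next
    case F1: False
    show ?thesis
    proof (cases "d2 = 0")
      case True
      obtain L0 where L0: "L0 \<in> VH" "L0 \<noteq> b1" "L0 \<noteq> b3" using avoid by blast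
      have "d1 \<ge> 1" "d3 \<ge> 1" using nz True by auto
      then have "labd VH d1 L0 b1" "labd VH d3 L0 b3" using ge1 L0 b by auto
      moreover obtain z2 where "labd VH d2 L0 z2" using anyz L0 by blast
      ultimately show ?thesis using L0(1) by blast
    next
      case False
      obtain L0 where L0: "L0 \<in> VH" "L0 \<noteq> b1" "L0 \<noteq> b2" using avoid by blast
      have "d1 \<ge> 1" "d2 \<ge> 1" using F1 False by auto
      then have "labd VH d1 L0 b1" "labd VH d2 L0 b2" using ge1 L0 b by auto
      moreover obtain z3 where "labd VH d3 L0 z3" using anyz L0 by blast
      ultimately show ?thesis using L0(1) by blast
    qed
  qed
qed


lemma path_mono:
  assumes "is_path TV TE xs" "TV \<subseteq> V" "TE \<subseteq> E" shows "is_path V E xs"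
  using assms unfolding is_path_def by blast

lemma path_pe:
  assumes "is_path V E xs" shows "path_edges xs \<subseteq> E"
  using assms by (intro path_edges_in) (simp add: is_path_def)

lemma inj_union_col:
  assumes "inj_on C A" "inj_on C B" "\<forall>e\<in>A. C e < (k::nat)" "\<forall>e\<in>B. C e \<ge> k"
  shows "inj_on C (A \<union> B)"
proof -
  have "C ` (A - B) \<inter> C ` (B - A) = {}"
  proof (rule ccontr)
    assume "C ` (A - B) \<inter> C ` (B - A) \<noteq> {}"
    then obtain x y where "x \<in> A" "y \<in> B" "C x = C y" by blast
    then show False using assms(3,4) by fastforce
  qed
  then show ?thesis using assms(1,2) inj_on_Un by blast
qed

locale LX =
  fixes VG :: "'a set" and EG :: "'a set set" and VH :: "'b set" and EH :: "'b set set"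
    and k :: nat and c :: "'a set \<Rightarrow> nat" and r :: nat and c' :: "'b set \<Rightarrow> nat"
  assumes sG: "sgraph VG EG" and cG: "gconnected VG EG" and c3: "card VG \<ge> 3"
    and sH: "sgraph VH EH" and cH: "gconnected VH EH" and h2: "card VH \<ge> 2"
    and k2: "k \<ge> 2" and cb: "\<forall>e\<in>EG. c e < k"
    and ctr: "\<forall>S. S \<subseteq> VG \<and> card S = 3 \<longrightarrow>
        (\<exists>TV TE. TV \<subseteq> VG \<and> TE \<subseteq> EG \<and> is_tree TV TE \<and> S \<subseteq> TV \<and> inj_on c TE)"
    and c'b: "\<forall>e\<in>EH. c' e < r"
    and c'p: "\<forall>u\<in>VH. \<forall>v\<in>VH. u \<noteq> v \<longrightarrow>
        (\<exists>xs. is_path VH EH xs \<and> hd xs = u \<and> last xs = v \<and> inj_on c' (path_edges xs))"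
begin

abbreviation "LE \<equiv> lex_edges VG EG VH EH"
abbreviation "CC \<equiv> Ccol k c c'"

definition good :: "('a \<times> 'b) set \<Rightarrow> bool" where
  "good S \<longleftrightarrow> (\<exists>F. F \<subseteq> LE \<and> inj_on CC F \<and> (\<exists>r0\<in>VG \<times> VH. \<forall>s\<in>S. (r0,s) \<in> (adj F)\<^sup>*))"

lemma hpath:
  assumes "u \<in> VH" "v \<in> VH"
  shows "\<exists>zs. is_path VH EH zs \<and> hd zs = u \<and> last zs = v \<and> inj_on c' (path_edges zs)"
proof (cases "u = v")
  case True
  have "is_path VH EH [u]" using assms by (simp add: is_path_def)
  moreover have "path_edges [u] = {}" by (simp add: path_edges_def)
  ultimately show ?thesis using True by (intro exI[of _ "[u]"]) simp
next
  case False then show ?thesis using c'p assms by blast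
qed

lemma gpath:
  assumes "g \<in> VG" "g' \<in> VG" "g \<noteq> g'"
  shows "\<exists>xs. is_path VG EG xs \<and> hd xs = g \<and> last xs = g' \<and> inj_on c (path_edges xs)"
proof -
  obtain x where x: "x \<in> VG" "x \<noteq> g" "x \<noteq> g'" using avoid2[OF c3] by blast
  have "card {g,g',x} = 3" using x assms by simp
  moreover have "{g,g',x} \<subseteq> VG" using x assms by simp
  ultimately have "\<exists>TV TE. TV \<subseteq> VG \<and> TE \<subseteq> EG \<and> is_tree TV TE \<and> {g,g',x} \<subseteq> TV \<and> inj_on c TE"
    using ctr[rule_format, of "{g,g',x}"] by blast
  then obtain TV TE where T: "TV \<subseteq> VG" "TE \<subseteq> EG" "is_tree TV TE" "{g,g',x} \<subseteq> TV" "inj_on c TE"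
    by blast
  have "gconnected TV TE" using T(3) by (simp add: is_tree_def)
  moreover have "g \<in> TV" "g' \<in> TV" using T(4) by auto
  ultimately obtain xs where xs: "is_path TV TE xs" "hd xs = g" "last xs = g'"
    unfolding gconnected_def by blast
  have "is_path VG EG xs" using path_mono[OF xs(1) T(1,2)] .
  moreover have "inj_on c (path_edges xs)" using path_pe[OF xs(1)] T(5) inj_on_subset by blast
  ultimately show ?thesis using xs by blast
qed

lemma nbr:
  assumes "g \<in> VG"
  shows "\<exists>g'. g' \<in> VG \<and> g' \<noteq> g \<and> {g,g'} \<in> EG"
proof -
  obtain x where x: "x \<in> VG" "x \<noteq> g" using avoid2[OF c3] by blast
  obtain xs where xs: "is_path VG EG xs" "hd xs = g" "last xs = x" using gpath[OF assms x(1)] x by metis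
  have ne: "xs \<noteq> []" using xs(1) by (simp add: is_path_def)
  have "length xs \<noteq> 1"
  proof
    assume "length xs = 1"
    then have "hd xs = last xs" by (cases xs) auto
    then show False using xs x by simp
  qed
  then have l2: "Suc 0 < length xs" using ne by (cases xs) auto
  have "{xs!0, xs!Suc 0} \<in> EG" using xs(1) l2 by (simp add: is_path_def)
  moreover have "xs!0 = g" using xs(2) ne by (simp add: hd_conv_nth)
  moreover have "xs!Suc 0 \<in> VG" using xs(1) l2 by (auto simp: is_path_def)
  moreover have "xs!Suc 0 \<noteq> xs!0" using xs(1) l2 by (simp add: is_path_def nth_eq_iff_index_eq)
  ultimately show ?thesis by metis
qed

lemma leg_all:
  assumes p: "is_path VG EG xs" and inj: "inj_on c (path_edges xs)" and lab: "lab_ok VH ys d s t"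
    and len: "length xs = Suc d"
  shows "path_edges (zip xs ys) \<subseteq> LE" "inj_on CC (path_edges (zip xs ys))"
    "\<forall>e\<in>path_edges (zip xs ys). CC e < k \<and> fst ` e \<in> path_edges xs \<and> CC e = c (fst ` e)"
    "((xs!0, s), (xs!d, t)) \<in> (adj (path_edges (zip xs ys)))\<^sup>*"
proof -
  have l: "length ys = length xs" "set ys \<subseteq> VH" "ys!0 = s" "ys!d = t"
    "\<forall>i. Suc i < length xs \<longrightarrow> ys!i \<noteq> ys!Suc i"
    using lab len by (auto simp: lab_ok_def)
  show "path_edges (zip xs ys) \<subseteq> LE" using leg_lex[OF p l(1,2)] .
  have col: "fst ` e \<in> path_edges xs \<and> CC e = c (fst ` e)" if "e \<in> path_edges (zip xs ys)" for e
    using leg_col[OF p l(1) l(5) that] .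
  have pe: "path_edges xs \<subseteq> EG" using path_pe[OF p] .
  show "\<forall>e\<in>path_edges (zip xs ys). CC e < k \<and> fst ` e \<in> path_edges xs \<and> CC e = c (fst ` e)"
    using col pe cb by fastforce
  show "inj_on CC (path_edges (zip xs ys))"
  proof (rule inj_onI)
    fix e1 e2 assume e1: "e1 \<in> path_edges (zip xs ys)" and e2: "e2 \<in> path_edges (zip xs ys)"
      and eq: "CC e1 = CC e2"
    have "c (fst ` e1) = c (fst ` e2)" using col[OF e1] col[OF e2] eq by simp
    then have "fst ` e1 = fst ` e2" using inj col[OF e1] col[OF e2] by (meson inj_onD)
    then show "e1 = e2" using leg_inj[OF p l(1) e1 e2] by simp
  qed
  show "((xs!0, s), (xs!d, t)) \<in> (adj (path_edges (zip xs ys)))\<^sup>*"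
    using leg_reach[OF l(1), of d] len l(3,4) by simp
qed

lemma fib_all:
  assumes p: "is_path VH EH zs" and inj: "inj_on c' (path_edges zs)" and g: "g \<in> VG"
  shows "path_edges (map (Pair g) zs) \<subseteq> LE" "inj_on CC (path_edges (map (Pair g) zs))"
    "\<forall>e\<in>path_edges (map (Pair g) zs). CC e \<ge> k"
    "((g, hd zs), (g, last zs)) \<in> (adj (path_edges (map (Pair g) zs)))\<^sup>*"
proof -
  show "path_edges (map (Pair g) zs) \<subseteq> LE" using fib_lex[OF p g] .
  show "inj_on CC (path_edges (map (Pair g) zs))" using fib_rainbow[OF p inj] .
  show "\<forall>e\<in>path_edges (map (Pair g) zs). CC e \<ge> k" by (intro ballI fib_range[OF p])
  have "zs \<noteq> []" using p by (simp add: is_path_def)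
  then show "((g, hd zs), (g, last zs)) \<in> (adj (path_edges (map (Pair g) zs)))\<^sup>*" by (rule fib_reach)
qed

end


context LX begin

lemma typeC:
  assumes g: "g \<in> VG" and h: "h1 \<in> VH" "h2 \<in> VH" "h3 \<in> VH" and d: "h1 \<noteq> h2" "h1 \<noteq> h3" "h2 \<noteq> h3"
  shows "good {(g,h1),(g,h2),(g,h3)}"
proof -
  obtain g' where g': "g' \<in> VG" "g' \<noteq> g" "{g,g'} \<in> EG" using nbr[OF g] by blast
  obtain zs where zs: "is_path VH EH zs" "hd zs = h1" "last zs = h2" "inj_on c' (path_edges zs)"
    using hpath[OF h(1,2)] by blast
  define F1 where "F1 = path_edges (map (Pair g) zs)"
  define e1 where "e1 = {(g,h3),(g',h3)}"
  define e2 where "e2 = {(g',h3),(g,h1)}"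
  note fa = fib_all[OF zs(1) zs(4) g]
  have ce: "c {g,g'} < k" using cb g' by blast
  have ce': "{g',g} = {g,g'}" by (simp add: insert_commute)
  have C1: "CC e1 = (if c {g,g'} = 0 then 1 else 0)" unfolding e1_def using Ccol_vert[of g g' k c c' h3] g'(2) by metis
  have C2: "CC e2 = c {g,g'}" unfolding e2_def using Ccol_cross[of g' g h3 h1] g' d ce' by simp
  have e12: "e1 \<noteq> e2" using d unfolding e1_def e2_def by (auto simp: doubleton_eq_iff)
  have inj2: "inj_on CC {e1,e2}"
  proof (rule inj_onI)
    fix x y assume "x \<in> {e1,e2}" "y \<in> {e1,e2}" "CC x = CC y"
    then show "x = y" using C1 C2 by (auto split: if_splits)
  qed
  have lt2: "\<forall>e\<in>{e1,e2}. CC e < k" using C1 C2 ce k2 by auto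
  have inj: "inj_on CC ({e1,e2} \<union> F1)"
    using inj_union_col[OF inj2 fa(2) lt2 fa(3)] by (simp add: F1_def)
  have lex: "{e1,e2} \<union> F1 \<subseteq> LE"
  proof -
    have "e1 \<in> LE" unfolding e1_def using lex_cross[OF g g'(1) h(3) h(3) g'(3)] .
    moreover have "e2 \<in> LE" unfolding e2_def using lex_cross[OF g'(1) g h(3) h(1)] g'(3) ce' by simp
    ultimately show ?thesis using fa(1) by (simp add: F1_def)
  qed
  define F where "F = {e1,e2} \<union> F1"
  have sub: "F1 \<subseteq> F" unfolding F_def by blast
  have r2: "((g,h1),(g,h2)) \<in> (adj F)\<^sup>*"
    using rtr_mono[OF sub] fa(4) zs(2,3) unfolding F1_def by metis
  have "((g,h1),(g',h3)) \<in> adj F" by (simp add: F_def e2_def insert_commute)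
  moreover have "((g',h3),(g,h3)) \<in> adj F" by (simp add: F_def e1_def insert_commute)
  ultimately have r3: "((g,h1),(g,h3)) \<in> (adj F)\<^sup>*" by (meson converse_rtrancl_into_rtrancl r_into_rtrancl)
  have "\<forall>s\<in>{(g,h1),(g,h2),(g,h3)}. ((g,h1),s) \<in> (adj F)\<^sup>*" using r2 r3 by auto
  moreover have "(g,h1) \<in> VG \<times> VH" using g h by simp
  ultimately show ?thesis unfolding good_def using inj lex F_def by blast
qed

lemma choose_z:
  assumes h: "h1 \<in> VH" "h2 \<in> VH" "h3 \<in> VH" and d: "h1 \<noteq> h2" and m: "m \<ge> 1"
  shows "\<exists>z. (z = h1 \<or> z = h2) \<and> (\<exists>ys. lab_ok VH ys m z h3)"
proof (cases "card VH = 2")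
  case True
  have fin: "finite VH" using True card.infinite by fastforce
  have VH: "VH = {h1,h2}"
  proof -
    have "{h1,h2} \<subseteq> VH" using h by auto
    moreover have "card {h1,h2} = 2" using d by simp
    ultimately show ?thesis using True fin by (metis card_subset_eq)
  qed
  show ?thesis
  proof (cases "(h1 = h3) = even m")
    case True
    then show ?thesis using lab_two[OF \<open>card VH = 2\<close> h(1) h(3)] by blast
  next
    case False
    have "(h2 = h3) = even m"
    proof (cases "h3 = h1")
      case True then show ?thesis using False d by auto
    next
      case F2: False
      then have "h3 = h2" using h(3) VH by auto
      then show ?thesis using False F2 by auto
    qed
    then show ?thesis using lab_two[OF \<open>card VH = 2\<close> h(2) h(3)] by blast
  qed
next
  case False
  then have c3': "card VH \<ge> 3" using h2 by simp
  show ?thesis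
  proof (cases "m = 1")
    case True
    obtain z where z: "z = h1 \<or> z = h2" "z \<noteq> h3" using d by metis
    then have "z \<in> VH" using h by auto
    then show ?thesis using lab_three[OF c3' _ h(3), of z m] z True by blast
  next
    case False
    then have "m \<ge> 2" using m by simp
    then show ?thesis using lab_three[OF c3' h(1) h(3), of m] by blast
  qed
qed

lemma typeB:
  assumes g: "g \<in> VG" "g' \<in> VG" "g \<noteq> g'" and h: "h1 \<in> VH" "h2 \<in> VH" "h3 \<in> VH" and d: "h1 \<noteq> h2"
  shows "good {(g,h1),(g,h2),(g',h3)}"
proof -
  obtain xs where xs: "is_path VG EG xs" "hd xs = g" "last xs = g'" "inj_on c (path_edges xs)"
    using gpath[OF g] by blast
  have ne: "xs \<noteq> []" using xs(1) by (simp add: is_path_def)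
  define m where "m = length xs - 1"
  have len: "length xs = Suc m" using ne by (simp add: m_def)
  have m1: "m \<ge> 1"
  proof (rule ccontr)
    assume "\<not> m \<ge> 1"
    then have "length xs = 1" using len by simp
    then have "hd xs = last xs" by (cases xs) auto
    then show False using xs g by simp
  qed
  obtain z ys where z: "z = h1 \<or> z = h2" and ys: "lab_ok VH ys m z h3"
    using choose_z[OF h d m1] by blast
  obtain zs where zs: "is_path VH EH zs" "hd zs = h1" "last zs = h2" "inj_on c' (path_edges zs)"
    using hpath[OF h(1,2)] by blast
  note fa = fib_all[OF zs(1) zs(4) g(1)]
  note la = leg_all[OF xs(1) xs(4) ys len]
  define F1 where "F1 = path_edges (map (Pair g) zs)"
  define F2 where "F2 = path_edges (zip xs ys)"
  define F where "F = F2 \<union> F1"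
  have lt: "\<forall>e\<in>F2. CC e < k" unfolding F2_def using la(3) by blast
  have inj: "inj_on CC F" unfolding F_def
    using inj_union_col[OF la(2) fa(2) _ fa(3)] lt by (simp add: F1_def F2_def)
  have lex: "F \<subseteq> LE" using fa(1) la(1) by (simp add: F_def F1_def F2_def)
  have s1: "F1 \<subseteq> F" unfolding F_def by blast
  have s2: "F2 \<subseteq> F" unfolding F_def by blast
  have x0: "xs!0 = g" "xs!m = g'" using xs(2,3) ne len by (simp_all add: hd_conv_nth last_conv_nth)
  have r2: "((g,h1),(g,h2)) \<in> (adj F)\<^sup>*"
    using rtr_mono[OF s1] fa(4) zs(2,3) unfolding F1_def by metis
  have rz: "((g,h1),(g,z)) \<in> (adj F)\<^sup>*" using z r2 by auto
  have "((g,z),(g',h3)) \<in> (adj F)\<^sup>*" using rtr_mono[OF s2] la(4) x0 unfolding F2_def by metis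
  then have r3: "((g,h1),(g',h3)) \<in> (adj F)\<^sup>*" using rz by (meson rtrancl_trans)
  have "\<forall>s\<in>{(g,h1),(g,h2),(g',h3)}. ((g,h1),s) \<in> (adj F)\<^sup>*" using r2 r3 by auto
  moreover have "(g,h1) \<in> VG \<times> VH" using g h by simp
  ultimately show ?thesis unfolding good_def using inj lex by blast
qed

end


lemma pe_take: "path_edges (take n xs) = {{xs!i, xs!Suc i} | i. Suc i < min n (length xs)}"
  unfolding path_edges_def
proof (rule Collect_cong)
  fix e show "(\<exists>i. e = {take n xs ! i, take n xs ! Suc i} \<and> Suc i < length (take n xs)) =
    (\<exists>i. e = {xs ! i, xs ! Suc i} \<and> Suc i < min n (length xs))"
  proof
    assume "\<exists>i. e = {take n xs ! i, take n xs ! Suc i} \<and> Suc i < length (take n xs)"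
    then obtain i where "e = {take n xs ! i, take n xs ! Suc i}" "Suc i < length (take n xs)" by blast
    then show "\<exists>i. e = {xs ! i, xs ! Suc i} \<and> Suc i < min n (length xs)"
      by (intro exI[of _ i]) (auto simp: nth_take)
  next
    assume "\<exists>i. e = {xs ! i, xs ! Suc i} \<and> Suc i < min n (length xs)"
    then obtain i where "e = {xs ! i, xs ! Suc i}" "Suc i < min n (length xs)" by blast
    then show "\<exists>i. e = {take n xs ! i, take n xs ! Suc i} \<and> Suc i < length (take n xs)"
      by (intro exI[of _ i]) (auto simp: nth_take)
  qed
qed

lemma pe_drop: "path_edges (drop j xs) = {{xs!(j+i), xs!Suc (j+i)} | i. Suc (j+i) < length xs}"
  unfolding path_edges_def
proof (rule Collect_cong)
  fix e show "(\<exists>i. e = {drop j xs ! i, drop j xs ! Suc i} \<and> Suc i < length (drop j xs)) =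
    (\<exists>i. e = {xs!(j+i), xs!Suc (j+i)} \<and> Suc (j+i) < length xs)"
  proof
    assume "\<exists>i. e = {drop j xs ! i, drop j xs ! Suc i} \<and> Suc i < length (drop j xs)"
    then obtain i where "e = {drop j xs ! i, drop j xs ! Suc i}" "Suc i < length (drop j xs)" by blast
    then show "\<exists>i. e = {xs!(j+i), xs!Suc (j+i)} \<and> Suc (j+i) < length xs"
      by (intro exI[of _ i]) (auto simp: nth_drop add.commute)
  next
    assume "\<exists>i. e = {xs!(j+i), xs!Suc (j+i)} \<and> Suc (j+i) < length xs"
    then obtain i where "e = {xs!(j+i), xs!Suc (j+i)}" "Suc (j+i) < length xs" by blast
    then show "\<exists>i. e = {drop j xs ! i, drop j xs ! Suc i} \<and> Suc i < length (drop j xs)"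
      by (intro exI[of _ i]) (auto simp: nth_drop add.commute)
  qed
qed

lemma pe_rev: "path_edges (rev xs) = path_edges xs"
proof -
  have a: "path_edges (rev ys) \<subseteq> path_edges ys" for ys :: "'a list"
  proof
    fix e assume "e \<in> path_edges (rev ys)"
    then obtain i where i: "e = {rev ys ! i, rev ys ! Suc i}" "Suc i < length ys"
      by (auto simp: path_edges_def)
    define j where "j = length ys - Suc (Suc i)"
    have "rev ys ! i = ys ! Suc j" "rev ys ! Suc i = ys ! j" using i(2)
      by (simp_all add: rev_nth j_def Suc_diff_Suc)
    then have "e = {ys!j, ys!Suc j}" using i(1) by (simp add: insert_commute)
    moreover have "Suc j < length ys" using i(2) by (simp add: j_def)
    ultimately show "e \<in> path_edges ys" by (auto simp: path_edges_def)
  qed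
  show ?thesis using a[of xs] a[of "rev xs"] by simp
qed

lemma path_rev:
  assumes "is_path V E xs" shows "is_path V E (rev xs)"
  unfolding is_path_def
proof (intro conjI allI impI)
  show "rev xs \<noteq> []" "distinct (rev xs)" "set (rev xs) \<subseteq> V" using assms by (auto simp: is_path_def)
  fix i assume i: "Suc i < length (rev xs)"
  have "{rev xs ! i, rev xs ! Suc i} \<in> path_edges (rev xs)" using i by (auto simp: path_edges_def)
  then have "{rev xs ! i, rev xs ! Suc i} \<in> path_edges xs" by (simp add: pe_rev)
  then show "{rev xs ! i, rev xs ! Suc i} \<in> E" using path_pe[OF assms] by blast
qed

lemma path_take:
  assumes "is_path V E xs" "n \<ge> 1" shows "is_path V E (take n xs)"
  using assms unfolding is_path_def by (auto dest: in_set_takeD)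

lemma path_drop:
  assumes "is_path V E xs" "j < length xs" shows "is_path V E (drop j xs)"
  using assms unfolding is_path_def by (auto dest: in_set_dropD)

lemma pe_sub_set: "e \<in> path_edges xs \<Longrightarrow> e \<subseteq> set xs"
  by (auto simp: path_edges_def)

lemma spider_legs:
  assumes Q: "is_path TV TE Q" "hd Q = a1" "last Q = a2"
    and R: "is_path TV TE R" "hd R = a3" "last R = a1"
  shows "\<exists>p l1 l2 l3. is_path TV TE l1 \<and> is_path TV TE l2 \<and> is_path TV TE l3 \<and>
    hd l1 = p \<and> hd l2 = p \<and> hd l3 = p \<and> last l1 = a1 \<and> last l2 = a2 \<and> last l3 = a3 \<and>
    path_edges l1 \<inter> path_edges l2 = {} \<and> path_edges l1 \<inter> path_edges l3 = {} \<and>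
    path_edges l2 \<inter> path_edges l3 = {}"
proof -
  have Qne: "Q \<noteq> []" and Rne: "R \<noteq> []" using Q(1) R(1) by (auto simp: is_path_def)
  have dQ: "distinct Q" using Q(1) by (simp add: is_path_def)
  have a1Q: "a1 \<in> set Q" using Q(2) Qne hd_in_set by blast
  have "R!(length R - 1) = a1" using Rne R(3) by (simp add: last_conv_nth)
  then have ex: "\<exists>i. i < length R \<and> R!i \<in> set Q"
    using Rne a1Q by (intro exI[of _ "length R - 1"]) simp
  define n0 where "n0 = (LEAST i. i < length R \<and> R!i \<in> set Q)"
  have n0: "n0 < length R" "R!n0 \<in> set Q" using LeastI_ex[OF ex] by (simp_all add: n0_def)
  have nmin: "R!i \<notin> set Q" if "i < n0" for i
  proof
    assume "R!i \<in> set Q"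
    then have "n0 \<le> i" using that n0(1) unfolding n0_def by (intro Least_le) simp
    then show False using that by simp
  qed
  define p where "p = R!n0"
  obtain j where j: "j < length Q" "Q!j = p" using n0(2) by (auto simp: p_def in_set_conv_nth)
  define l1 where "l1 = rev (take (Suc j) Q)"
  define l2 where "l2 = drop j Q"
  define l3 where "l3 = rev (take (Suc n0) R)"
  have p1: "is_path TV TE l1" unfolding l1_def by (intro path_rev path_take Q(1)) simp
  have p2: "is_path TV TE l2" unfolding l2_def by (intro path_drop Q(1) j(1))
  have p3: "is_path TV TE l3" unfolding l3_def by (intro path_rev path_take R(1)) simp
  have h1: "hd l1 = p" using j by (simp add: l1_def hd_rev take_Suc_conv_app_nth)
  have h2: "hd l2 = p" using j by (simp add: l2_def hd_drop_conv_nth)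
  have h3: "hd l3 = p" using n0 by (simp add: l3_def hd_rev take_Suc_conv_app_nth p_def)
  have t1: "last l1 = a1" using Qne Q(2) by (simp add: l1_def last_rev hd_conv_nth)
  have t2: "last l2 = a2" using j Q(3) by (simp add: l2_def)
  have t3: "last l3 = a3" using Rne R(2) by (simp add: l3_def last_rev hd_conv_nth)
  have d12: "path_edges l1 \<inter> path_edges l2 = {}"
  proof (rule ccontr)
    assume "path_edges l1 \<inter> path_edges l2 \<noteq> {}"
    then obtain e where e1: "e \<in> path_edges (take (Suc j) Q)" and e2: "e \<in> path_edges (drop j Q)"
      by (auto simp: l1_def l2_def pe_rev)
    obtain i where i: "e = {Q!i, Q!Suc i}" "Suc i < min (Suc j) (length Q)" using e1 by (auto simp: pe_take)
    obtain i' where i': "e = {Q!(j+i'), Q!Suc (j+i')}" "Suc (j+i') < length Q" using e2 by (auto simp: pe_drop)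
    have "i = j + i'" using distinct_edge_idx[OF dQ, of i "j+i'"] i i' by simp
    then show False using i(2) by simp
  qed
  have d3: "e \<notin> path_edges l3" if "e \<subseteq> set Q" for e
  proof
    assume "e \<in> path_edges l3"
    then have "e \<in> path_edges (take (Suc n0) R)" by (simp add: l3_def pe_rev)
    then obtain i where i: "e = {R!i, R!Suc i}" "Suc i < min (Suc n0) (length R)" by (auto simp: pe_take)
    then have "R!i \<in> set Q" using that by auto
    moreover have "i < n0" using i(2) by simp
    ultimately show False using nmin by blast
  qed
  have d13: "path_edges l1 \<inter> path_edges l3 = {}"
  proof -
    have "e \<subseteq> set Q" if "e \<in> path_edges l1" for e
      using pe_sub_set[OF that] by (auto simp: l1_def dest: in_set_takeD)
    then show ?thesis using d3 by blast
  qed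
  have d23: "path_edges l2 \<inter> path_edges l3 = {}"
  proof -
    have "e \<subseteq> set Q" if "e \<in> path_edges l2" for e
      using pe_sub_set[OF that] by (auto simp: l2_def dest: in_set_dropD)
    then show ?thesis using d3 by blast
  qed
  show ?thesis using p1 p2 p3 h1 h2 h3 t1 t2 t3 d12 d13 d23 by blast
qed


context LX begin

lemma fixone:
  assumes L: "L \<subseteq> LE" "inj_on CC L" "\<forall>e\<in>L. CC e < k" and rz: "(r0,(a,z)) \<in> (adj L)\<^sup>*"
    and a: "a \<in> VG" and z: "z \<in> VH" and b: "b \<in> VH"
  shows "\<exists>F. L \<subseteq> F \<and> F \<subseteq> LE \<and> inj_on CC F \<and> (r0,(a,b)) \<in> (adj F)\<^sup>*"
proof -
  obtain zs where zs: "is_path VH EH zs" "hd zs = z" "last zs = b" "inj_on c' (path_edges zs)"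
    using hpath[OF z b] by blast
  note fa = fib_all[OF zs(1) zs(4) a]
  define X where "X = path_edges (map (Pair a) zs)"
  define F where "F = L \<union> X"
  have inj: "inj_on CC F" unfolding F_def X_def using inj_union_col[OF L(2) fa(2) L(3) fa(3)] .
  have lex: "F \<subseteq> LE" unfolding F_def X_def using L(1) fa(1) by blast
  have s1: "L \<subseteq> F" unfolding F_def by blast
  have s2: "X \<subseteq> F" unfolding F_def by blast
  have "(r0,(a,z)) \<in> (adj F)\<^sup>*" using rtr_mono[OF s1 rz] .
  moreover have "((a,z),(a,b)) \<in> (adj F)\<^sup>*" using rtr_mono[OF s2] fa(4) zs(2,3) unfolding X_def by metis
  ultimately have "(r0,(a,b)) \<in> (adj F)\<^sup>*" by (rule rtrancl_trans)
  then show ?thesis using inj lex s1 by blast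
qed

lemma len1_hd_last: "length xs = Suc 0 \<Longrightarrow> hd xs = last xs"
  by (cases xs) auto

lemma typeA:
  assumes a: "a1 \<in> VG" "a2 \<in> VG" "a3 \<in> VG" and ad: "a1 \<noteq> a2" "a1 \<noteq> a3" "a2 \<noteq> a3"
    and b: "b1 \<in> VH" "b2 \<in> VH" "b3 \<in> VH"
  shows "good {(a1,b1),(a2,b2),(a3,b3)}"
proof -
  have "card {a1,a2,a3} = 3" using ad by simp
  moreover have "{a1,a2,a3} \<subseteq> VG" using a by simp
  ultimately have "\<exists>TV TE. TV \<subseteq> VG \<and> TE \<subseteq> EG \<and> is_tree TV TE \<and> {a1,a2,a3} \<subseteq> TV \<and> inj_on c TE"
    using ctr[rule_format, of "{a1,a2,a3}"] by blast
  then obtain TV TE where T: "TV \<subseteq> VG" "TE \<subseteq> EG" "is_tree TV TE" "{a1,a2,a3} \<subseteq> TV" "inj_on c TE"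
    by blast
  have gc: "gconnected TV TE" using T(3) by (simp add: is_tree_def)
  have inT: "a1 \<in> TV" "a2 \<in> TV" "a3 \<in> TV" using T(4) by auto
  obtain Q where Q: "is_path TV TE Q" "hd Q = a1" "last Q = a2" using gc inT unfolding gconnected_def by blast
  obtain R where R: "is_path TV TE R" "hd R = a3" "last R = a1" using gc inT unfolding gconnected_def by blast
  obtain p l1 l2 l3 where sp: "is_path TV TE l1" "is_path TV TE l2" "is_path TV TE l3"
    "hd l1 = p" "hd l2 = p" "hd l3 = p" "last l1 = a1" "last l2 = a2" "last l3 = a3"
    "path_edges l1 \<inter> path_edges l2 = {}" "path_edges l1 \<inter> path_edges l3 = {}"
    "path_edges l2 \<inter> path_edges l3 = {}"
    using spider_legs[OF Q R] by blast
  have pG: "is_path VG EG l1" "is_path VG EG l2" "is_path VG EG l3"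
    using path_mono[OF _ T(1,2)] sp(1-3) by blast+
  have peT: "path_edges l1 \<subseteq> TE" "path_edges l2 \<subseteq> TE" "path_edges l3 \<subseteq> TE"
    using path_pe sp(1-3) by blast+
  have injl: "inj_on c (path_edges l1)" "inj_on c (path_edges l2)" "inj_on c (path_edges l3)"
    using inj_on_subset[OF T(5)] peT by blast+
  have ne: "l1 \<noteq> []" "l2 \<noteq> []" "l3 \<noteq> []" using sp(1-3) by (auto simp: is_path_def)
  define d1 where "d1 = length l1 - 1"
  define d2 where "d2 = length l2 - 1"
  define d3 where "d3 = length l3 - 1"
  have len: "length l1 = Suc d1" "length l2 = Suc d2" "length l3 = Suc d3"
    using ne by (simp_all add: d1_def d2_def d3_def)
  have z1: "d1 = 0 \<Longrightarrow> a1 = p" using len1_hd_last[of l1] len sp by simp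
  have z2: "d2 = 0 \<Longrightarrow> a2 = p" using len1_hd_last[of l2] len sp by simp
  have z3: "d3 = 0 \<Longrightarrow> a3 = p" using len1_hd_last[of l3] len sp by simp
  have nz: "\<not>(d1 = 0 \<and> d2 = 0)" "\<not>(d1 = 0 \<and> d3 = 0)" "\<not>(d2 = 0 \<and> d3 = 0)"
    using z1 z2 z3 ad by auto
  obtain L z1 z2 z3 where L: "L \<in> VH" "labd VH d1 L z1" "labd VH d2 L z2" "labd VH d3 L z3"
    and match: "(z1 = b1 \<and> z2 = b2) \<or> (z1 = b1 \<and> z3 = b3) \<or> (z2 = b2 \<and> z3 = b3)"
    using spider_choice[OF h2 b nz] by blast
  obtain ys1 where ys1: "lab_ok VH ys1 d1 L z1" using L(2) by (auto simp: labd_def)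
  obtain ys2 where ys2: "lab_ok VH ys2 d2 L z2" using L(3) by (auto simp: labd_def)
  obtain ys3 where ys3: "lab_ok VH ys3 d3 L z3" using L(4) by (auto simp: labd_def)
  have zV: "z1 \<in> VH" "z2 \<in> VH" "z3 \<in> VH" using ys1 ys2 ys3 len
    by (auto simp: lab_ok_def)
  note la1 = leg_all[OF pG(1) injl(1) ys1 len(1)]
  note la2 = leg_all[OF pG(2) injl(2) ys2 len(2)]
  note la3 = leg_all[OF pG(3) injl(3) ys3 len(3)]
  define F1 where "F1 = path_edges (zip l1 ys1)"
  define F2 where "F2 = path_edges (zip l2 ys2)"
  define F3 where "F3 = path_edges (zip l3 ys3)"
  define Lall where "Lall = F1 \<union> F2 \<union> F3"
  have info: "\<forall>e\<in>F1. CC e < k \<and> fst ` e \<in> path_edges l1 \<and> CC e = c (fst ` e)"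
    "\<forall>e\<in>F2. CC e < k \<and> fst ` e \<in> path_edges l2 \<and> CC e = c (fst ` e)"
    "\<forall>e\<in>F3. CC e < k \<and> fst ` e \<in> path_edges l3 \<and> CC e = c (fst ` e)"
    using la1(3) la2(3) la3(3) unfolding F1_def F2_def F3_def by blast+
  have lt: "\<forall>e\<in>Lall. CC e < k" using info unfolding Lall_def by blast
  have lex: "Lall \<subseteq> LE" using la1(1) la2(1) la3(1) unfolding Lall_def F1_def F2_def F3_def by blast
  have fstinj: "e = e'" if e: "e \<in> Lall" and e': "e' \<in> Lall" and eq: "fst ` e = fst ` e'" for e e'
  proof -
    have i1: "e = e'" if "e \<in> F1" "e' \<in> F1" using leg_inj[OF pG(1) _ that[unfolded F1_def] eq] ys1 len
      by (simp add: lab_ok_def)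
    have i2: "e = e'" if "e \<in> F2" "e' \<in> F2" using leg_inj[OF pG(2) _ that[unfolded F2_def] eq] ys2 len
      by (simp add: lab_ok_def)
    have i3: "e = e'" if "e \<in> F3" "e' \<in> F3" using leg_inj[OF pG(3) _ that[unfolded F3_def] eq] ys3 len
      by (simp add: lab_ok_def)
    have f1: "fst ` x \<in> path_edges l1" if "x \<in> F1" for x using info(1) that by blast
    have f2: "fst ` x \<in> path_edges l2" if "x \<in> F2" for x using info(2) that by blast
    have f3: "fst ` x \<in> path_edges l3" if "x \<in> F3" for x using info(3) that by blast
    have x12: False if "e \<in> F1" "e' \<in> F2 \<or> e' \<in> F3"
    proof -
      have "fst ` e \<in> path_edges l1" using f1 that(1) by blast
      moreover have "fst ` e \<in> path_edges l2 \<or> fst ` e \<in> path_edges l3" using f2 f3 that(2) eq by metis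
      ultimately show False using sp(10,11) by blast
    qed
    have x21: False if "e \<in> F2" "e' \<in> F1 \<or> e' \<in> F3"
    proof -
      have "fst ` e \<in> path_edges l2" using f2 that(1) by blast
      moreover have "fst ` e \<in> path_edges l1 \<or> fst ` e \<in> path_edges l3" using f1 f3 that(2) eq by metis
      ultimately show False using sp(10,12) by blast
    qed
    have x31: False if "e \<in> F3" "e' \<in> F1 \<or> e' \<in> F2"
    proof -
      have "fst ` e \<in> path_edges l3" using f3 that(1) by blast
      moreover have "fst ` e \<in> path_edges l1 \<or> fst ` e \<in> path_edges l2" using f1 f2 that(2) eq by metis
      ultimately show False using sp(11,12) by blast
    qed
    show ?thesis using e e' i1 i2 i3 x12 x21 x31 unfolding Lall_def by blast
  qed
  have inj: "inj_on CC Lall"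
  proof (rule inj_onI)
    fix e e' assume e: "e \<in> Lall" and e': "e' \<in> Lall" and eq: "CC e = CC e'"
    have m: "CC x = c (fst ` x) \<and> fst ` x \<in> TE" if "x \<in> Lall" for x
      using that info peT unfolding Lall_def by blast
    have "c (fst ` e) = c (fst ` e')" using m[OF e] m[OF e'] eq by simp
    then have "fst ` e = fst ` e'" using T(5) m[OF e] m[OF e'] by (meson inj_onD)
    then show "e = e'" using fstinj e e' by blast
  qed
  have h0: "l1!0 = p" "l2!0 = p" "l3!0 = p" using sp(4-6) ne by (simp_all add: hd_conv_nth)
  have hl: "l1!d1 = a1" "l2!d2 = a2" "l3!d3 = a3" using sp(7-9) ne len by (simp_all add: last_conv_nth)
  have s1: "F1 \<subseteq> Lall" "F2 \<subseteq> Lall" "F3 \<subseteq> Lall" unfolding Lall_def by blast+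
  have r1: "((p,L),(a1,z1)) \<in> (adj Lall)\<^sup>*" using rtr_mono[OF s1(1)] la1(4) h0 hl unfolding F1_def by metis
  have r2: "((p,L),(a2,z2)) \<in> (adj Lall)\<^sup>*" using rtr_mono[OF s1(2)] la2(4) h0 hl unfolding F2_def by metis
  have r3: "((p,L),(a3,z3)) \<in> (adj Lall)\<^sup>*" using rtr_mono[OF s1(3)] la3(4) h0 hl unfolding F3_def by metis
  have pV: "p \<in> VG" using sp(4) ne(1) pG(1) by (auto simp: is_path_def)
  have root: "(p,L) \<in> VG \<times> VH" using pV L(1) by simp
  show ?thesis
  proof (rule disjE[OF match])
    assume m: "z1 = b1 \<and> z2 = b2"
    obtain F where F: "Lall \<subseteq> F" "F \<subseteq> LE" "inj_on CC F" "((p,L),(a3,b3)) \<in> (adj F)\<^sup>*"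
      using fixone[OF lex inj lt r3 a(3) zV(3) b(3)] by blast
    have "((p,L),(a1,b1)) \<in> (adj F)\<^sup>*" "((p,L),(a2,b2)) \<in> (adj F)\<^sup>*"
      using rtr_mono[OF F(1) r1] rtr_mono[OF F(1) r2] m by simp_all
    then show ?thesis unfolding good_def using F root by blast
  next
    assume "(z1 = b1 \<and> z3 = b3) \<or> (z2 = b2 \<and> z3 = b3)"
    then show ?thesis
    proof
      assume m: "z1 = b1 \<and> z3 = b3"
      obtain F where F: "Lall \<subseteq> F" "F \<subseteq> LE" "inj_on CC F" "((p,L),(a2,b2)) \<in> (adj F)\<^sup>*"
        using fixone[OF lex inj lt r2 a(2) zV(2) b(2)] by blast
      have "((p,L),(a1,b1)) \<in> (adj F)\<^sup>*" "((p,L),(a3,b3)) \<in> (adj F)\<^sup>*"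
        using rtr_mono[OF F(1) r1] rtr_mono[OF F(1) r3] m by simp_all
      then show ?thesis unfolding good_def using F root by blast
    next
      assume m: "z2 = b2 \<and> z3 = b3"
      obtain F where F: "Lall \<subseteq> F" "F \<subseteq> LE" "inj_on CC F" "((p,L),(a1,b1)) \<in> (adj F)\<^sup>*"
        using fixone[OF lex inj lt r1 a(1) zV(1) b(1)] by blast
      have "((p,L),(a2,b2)) \<in> (adj F)\<^sup>*" "((p,L),(a3,b3)) \<in> (adj F)\<^sup>*"
        using rtr_mono[OF F(1) r2] rtr_mono[OF F(1) r3] m by simp_all
      then show ?thesis unfolding good_def using F root by blast
    qed
  qed
qed

end


lemma sg_ne: assumes "sgraph V E" "{a,b} \<in> E" shows "a \<noteq> b"
proof
  assume ab: "a = b"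
  obtain u v where "u \<noteq> v" "{a,b} = {u,v}" using assms unfolding sgraph_def by metis
  then show False using ab by (auto simp: doubleton_eq_iff)
qed

lemma lex_sgraph:
  assumes sG: "sgraph VG EG" and sH: "sgraph VH EH"
  shows "sgraph (VG \<times> VH) (lex_edges VG EG VH EH)"
  unfolding sgraph_def
proof (intro conjI ballI)
  show "finite (VG \<times> VH)" using sG sH by (simp add: sgraph_def)
  fix e assume "e \<in> lex_edges VG EG VH EH"
  then obtain g1 h1 g2 h2 where e: "e = {(g1,h1),(g2,h2)}" "g1 \<in> VG" "g2 \<in> VG" "h1 \<in> VH" "h2 \<in> VH"
    "{g1,g2} \<in> EG \<or> (g1 = g2 \<and> {h1,h2} \<in> EH)" unfolding lex_edges_def by blast
  have "(g1,h1) \<noteq> (g2,h2)" using e(6) sg_ne[OF sG, of g1 g2] sg_ne[OF sH, of h1 h2] by auto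
  then show "\<exists>u v. u \<in> VG \<times> VH \<and> v \<in> VG \<times> VH \<and> u \<noteq> v \<and> e = {u, v}" using e by blast
qed

context LX begin

lemma all_good:
  assumes S: "S \<subseteq> VG \<times> VH" "card S = 3"
  shows "good S"
proof -
  obtain x y z where xyz: "S = {x,y,z}" "x \<noteq> y" "y \<noteq> z" "x \<noteq> z" using S(2) card_3_iff by metis
  obtain g1 h1 where x: "x = (g1,h1)" by (cases x)
  obtain g2 h2 where y: "y = (g2,h2)" by (cases y)
  obtain g3 h3 where z: "z = (g3,h3)" by (cases z)
  have V: "g1 \<in> VG" "g2 \<in> VG" "g3 \<in> VG" "h1 \<in> VH" "h2 \<in> VH" "h3 \<in> VH"
    using S(1) xyz(1) x y z by auto
  show ?thesis
  proof (cases "g1 = g2")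
    case T12: True
    show ?thesis
    proof (cases "g1 = g3")
      case True
      then have "h1 \<noteq> h2" "h1 \<noteq> h3" "h2 \<noteq> h3" using xyz x y z T12 by auto
      then show ?thesis using typeC[OF V(1) V(4-6)] xyz(1) x y z T12 True by simp
    next
      case False
      have "h1 \<noteq> h2" using xyz x y T12 by auto
      then show ?thesis using typeB[OF V(1) V(3) False V(4-6)] xyz(1) x y z T12 by simp
    qed
  next
    case F12: False
    show ?thesis
    proof (cases "g1 = g3")
      case True
      have "h1 \<noteq> h3" using xyz x z True by auto
      then have "good {(g1,h1),(g1,h3),(g2,h2)}" using typeB[OF V(1) V(2) F12 V(4) V(6) V(5)] by simp
      moreover have "{(g1,h1),(g1,h3),(g2,h2)} = S" using xyz(1) x y z True by auto
      ultimately show ?thesis by simp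
    next
      case F13: False
      show ?thesis
      proof (cases "g2 = g3")
        case True
        have "h2 \<noteq> h3" using xyz y z True by auto
        moreover have "g2 \<noteq> g1" using F12 by simp
        ultimately have "good {(g2,h2),(g2,h3),(g1,h1)}" using typeB[OF V(2) V(1) _ V(5) V(6) V(4)] by simp
        moreover have "{(g2,h2),(g2,h3),(g1,h1)} = S" using xyz(1) x y z True by auto
        ultimately show ?thesis by simp
      next
        case False
        then show ?thesis using typeA[OF V(1-3) F12 F13 False V(4-6)] xyz(1) x y z by simp
      qed
    qed
  qed
qed

lemma col_bound: "\<forall>e\<in>LE. CC e < k + r"
proof
  fix e assume "e \<in> LE"
  then obtain g1 h1 g2 h2 where e: "e = {(g1,h1),(g2,h2)}" "g1 \<in> VG" "g2 \<in> VG" "h1 \<in> VH" "h2 \<in> VH"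
    "{g1,g2} \<in> EG \<or> (g1 = g2 \<and> {h1,h2} \<in> EH)" unfolding lex_edges_def by blast
  show "CC e < k + r"
  proof (cases "{g1,g2} \<in> EG")
    case True
    have ne: "g1 \<noteq> g2" using sg_ne[OF sG True] .
    have ck: "c {g1,g2} < k" using cb True by blast
    show ?thesis
    proof (cases "h1 = h2")
      case True then show ?thesis using e(1) Ccol_vert[OF ne, of k c c' h1] k2 by simp
    next
      case False then show ?thesis using e(1) Ccol_cross[OF ne False, of k c c'] ck by simp
    qed
  next
    case False
    then have g: "g1 = g2" "{h1,h2} \<in> EH" using e(6) by auto
    have ne: "h1 \<noteq> h2" using sg_ne[OF sH g(2)] .
    have "c' {h1,h2} < r" using c'b g(2) by blast
    then show ?thesis using e(1) g(1) Ccol_fib[OF ne, of k c c' g1] by simp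
  qed
qed

lemma prod_valid:
  "(\<forall>e\<in>LE. CC e < k + r) \<and>
     (\<forall>S. S \<subseteq> VG \<times> VH \<and> card S = 3 \<longrightarrow>
        (\<exists>TV TE. TV \<subseteq> VG \<times> VH \<and> TE \<subseteq> LE \<and> is_tree TV TE \<and> S \<subseteq> TV \<and> inj_on CC TE))"
proof (intro conjI allI impI)
  show "\<forall>e\<in>LE. CC e < k + r" by (rule col_bound)
  fix S assume S: "S \<subseteq> VG \<times> VH \<and> card S = 3"
  then have "good S" using all_good by blast
  then obtain F r0 where F: "F \<subseteq> LE" "inj_on CC F" "r0 \<in> VG \<times> VH" "\<forall>s\<in>S. (r0,s) \<in> (adj F)\<^sup>*"
    unfolding good_def by blast
  have sg: "sgraph (VG \<times> VH) LE" using lex_sgraph[OF sG sH] .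
  have "\<exists>TV TE. TV \<subseteq> VG \<times> VH \<and> TE \<subseteq> F \<and> is_tree TV TE \<and> S \<subseteq> TV"
  proof (rule tree_extract[OF _ _ F(3) F(4)])
    show "finite (VG \<times> VH)" using sg by (simp add: sgraph_def)
    show "\<forall>e\<in>F. \<exists>u v. u \<in> VG \<times> VH \<and> v \<in> VG \<times> VH \<and> u \<noteq> v \<and> e = {u, v}"
      using sg F(1) unfolding sgraph_def by blast
  qed
  then obtain TV TE where T: "TV \<subseteq> VG \<times> VH" "TE \<subseteq> F" "is_tree TV TE" "S \<subseteq> TV" by blast
  have "TE \<subseteq> LE" using F(1) T(2) by (rule order_trans[rotated])
  moreover have "inj_on CC TE" using inj_on_subset[OF F(2) T(2)] .
  ultimately show "\<exists>TV TE. TV \<subseteq> VG \<times> VH \<and> TE \<subseteq> LE \<and> is_tree TV TE \<and> S \<subseteq> TV \<and> inj_on CC TE"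
    using T(1,3,4) by blast
qed

end


lemma lex_proj:
  assumes "{x,y} \<in> lex_edges VG EG VH EH"
  shows "fst x = fst y \<or> {fst x, fst y} \<in> EG"
proof -
  obtain g1 h1 g2 h2 where e: "{x,y} = {(g1,h1),(g2,h2)}"
    "{g1,g2} \<in> EG \<or> (g1 = g2 \<and> {h1,h2} \<in> EH)" using assms unfolding lex_edges_def by blast
  then have "(x = (g1,h1) \<and> y = (g2,h2)) \<or> (x = (g2,h2) \<and> y = (g1,h1))" by (auto simp: doubleton_eq_iff)
  then show ?thesis using e(2) by (auto simp: insert_commute)
qed

lemma proj_walk:
  assumes P: "is_path TV TE P" and TE: "TE \<subseteq> lex_edges VG EG VH EH" and i: "i < length P"
  shows "\<exists>n\<le>i. (fst (P!0), fst (P!i)) \<in> (adj EG)^^n"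
  using i
proof (induction i)
  case 0 then show ?case by simp
next
  case (Suc i)
  then obtain n where n: "n \<le> i" "(fst (P!0), fst (P!i)) \<in> (adj EG)^^n" by auto
  have "{P!i, P!Suc i} \<in> TE" using P Suc.prems by (simp add: is_path_def)
  then have "fst (P!i) = fst (P!Suc i) \<or> {fst (P!i), fst (P!Suc i)} \<in> EG" using TE lex_proj by blast
  then show ?case
  proof
    assume "fst (P!i) = fst (P!Suc i)"
    then show ?case using n by (intro exI[of _ n]) auto
  next
    assume "{fst (P!i), fst (P!Suc i)} \<in> EG"
    then have "(fst (P!0), fst (P!Suc i)) \<in> (adj EG)^^(Suc n)" using n(2) by auto
    then show ?case using n(1) by (intro exI[of _ "Suc n"]) auto
  qed
qed

lemma gdist_le:
  assumes "is_path V E xs" "hd xs = u" "last xs = v"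
  shows "gdist V E u v \<le> length xs - 1"
proof -
  have "xs \<noteq> []" using assms by (simp add: is_path_def)
  then have "length xs = Suc (length xs - 1)" by simp
  then show ?thesis unfolding gdist_def using assms by (intro Least_le) blast
qed

lemma proj_len:
  assumes sG: "sgraph VG EG" and P: "is_path TV TE P" and TE: "TE \<subseteq> lex_edges VG EG VH EH"
    and TV: "TV \<subseteq> VG \<times> VH"
  shows "gdist VG EG (fst (hd P)) (fst (last P)) + 1 \<le> length P"
proof -
  have ne: "P \<noteq> []" using P by (simp add: is_path_def)
  obtain n where n: "n \<le> length P - 1" "(fst (P!0), fst (P!(length P - 1))) \<in> (adj EG)^^n"
    using proj_walk[OF P TE, of "length P - 1"] ne by auto
  have "P!0 \<in> TV" using P ne by (auto simp: is_path_def)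
  then have u: "fst (P!0) \<in> VG" using TV by auto
  have Esub: "\<forall>e\<in>EG. e \<subseteq> VG" using sgraph_sub[OF sG] by blast
  obtain xs where xs: "is_path VG EG xs" "hd xs = fst (P!0)" "last xs = fst (P!(length P - 1))"
    "length xs \<le> Suc n" using relpow_path[OF n(2) u Esub] by blast
  have "gdist VG EG (fst (P!0)) (fst (P!(length P - 1))) \<le> length xs - 1" using gdist_le[OF xs(1-3)] .
  moreover have lp: "length P \<ge> 1" using ne by (cases P) auto
  ultimately have "gdist VG EG (fst (P!0)) (fst (P!(length P - 1))) + 1 \<le> length P"
    using xs(4) n(1) by linarith
  then show ?thesis using ne by (simp add: hd_conv_nth last_conv_nth)
qed

lemma lower_bound:
  assumes sG: "sgraph VG EG" and sH: "sgraph VH EH" and u: "u \<in> VG" "v \<in> VG" "u \<noteq> v"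
    and h: "h1 \<in> VH" "h2 \<in> VH" "h1 \<noteq> h2"
    and Cb: "\<forall>e\<in>lex_edges VG EG VH EH. C e < K"
    and tr: "\<forall>S. S \<subseteq> VG \<times> VH \<and> card S = 3 \<longrightarrow>
        (\<exists>TV TE. TV \<subseteq> VG \<times> VH \<and> TE \<subseteq> lex_edges VG EG VH EH \<and> is_tree TV TE \<and> S \<subseteq> TV \<and> inj_on C TE)"
  shows "gdist VG EG u v + 1 \<le> K"
proof -
  define S where "S = {(u,h1),(v,h1),(v,h2)}"
  have "S \<subseteq> VG \<times> VH" "card S = 3" using u h by (auto simp: S_def)
  then have "\<exists>TV TE. TV \<subseteq> VG \<times> VH \<and> TE \<subseteq> lex_edges VG EG VH EH \<and> is_tree TV TE \<and> S \<subseteq> TV \<and> inj_on C TE"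
    using tr by blast
  then obtain TV TE where T: "TV \<subseteq> VG \<times> VH" "TE \<subseteq> lex_edges VG EG VH EH" "is_tree TV TE" "S \<subseteq> TV"
    "inj_on C TE" by blast
  have sg: "sgraph (VG \<times> VH) (lex_edges VG EG VH EH)" using lex_sgraph[OF sG sH] .
  have finTE: "finite TE" using sgraph_finE[OF sg] T(2) finite_subset by blast
  have finTV: "finite TV" using T(1) sg finite_subset unfolding sgraph_def by blast
  have cTE: "card TE \<le> K" using T(2) Cb by (intro rainbow_card[OF T(5)]) blast
  have cTV: "card TV \<le> card TE + 1" using tree_card[OF T(3) finTE] .
  have gc: "gconnected TV TE" using T(3) by (simp add: is_tree_def)
  have in3: "(u,h1) \<in> TV" "(v,h1) \<in> TV" "(v,h2) \<in> TV" using T(4) by (auto simp: S_def)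
  obtain P where P: "is_path TV TE P" "hd P = (u,h1)" "last P = (v,h1)"
    using gc in3 unfolding gconnected_def by blast
  have ne: "P \<noteq> []" and dP: "distinct P" and sP: "set P \<subseteq> TV" using P by (auto simp: is_path_def)
  have lenP: "card (set P) = length P" using dP by (simp add: distinct_card)
  have gl: "gdist VG EG u v + 1 \<le> length P" using proj_len[OF sG P(1) T(2) T(1)] P by simp
  have "gdist VG EG u v + 2 \<le> card TV"
  proof (cases "(v,h2) \<in> set P")
    case False
    have "insert (v,h2) (set P) \<subseteq> TV" using sP in3 by auto
    then have "card (insert (v,h2) (set P)) \<le> card TV" using finTV by (rule card_mono[rotated])
    moreover have "card (insert (v,h2) (set P)) = length P + 1" using False lenP by simp
    ultimately show ?thesis using gl by simp
  next
    case True
    then obtain i where i: "i < length P" "P!i = (v,h2)" by (auto simp: in_set_conv_nth)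
    have last: "P!(length P - 1) = (v,h1)" using P(3) ne by (simp add: last_conv_nth)
    have "i \<noteq> length P - 1" using i last h(3) by auto
    then have il: "Suc i < length P" using i(1) by simp
    have Pt: "is_path TV TE (take (Suc i) P)" using P(1) unfolding is_path_def by (auto dest: in_set_takeD)
    have "hd (take (Suc i) P) = (u,h1)" using P(2) ne by simp
    moreover have "last (take (Suc i) P) = (v,h2)" using i by (simp add: take_Suc_conv_app_nth)
    ultimately have "gdist VG EG u v + 1 \<le> length (take (Suc i) P)" using proj_len[OF sG Pt T(2) T(1)] by simp
    then have "gdist VG EG u v + 2 \<le> length P" using il by simp
    moreover have "card (set P) \<le> card TV" using finTV sP by (rule card_mono)
    ultimately show ?thesis using lenP by simp
  qed
  then show ?thesis using cTE cTV by simp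
qed


lemma rc_complete:
  assumes cpl: "complete_graph VH EH" and c2: "card VH \<ge> 2"
  shows "rc VH EH = 1"
  unfolding rc_def
proof (rule Least_equality)
  let ?c = "(\<lambda>_. 0) :: 'a set \<Rightarrow> nat"
  have "\<forall>u\<in>VH. \<forall>v\<in>VH. u \<noteq> v \<longrightarrow>
        (\<exists>xs. is_path VH EH xs \<and> hd xs = u \<and> last xs = v \<and> inj_on ?c (path_edges xs))"
  proof (intro ballI impI)
    fix u v assume uv: "u \<in> VH" "v \<in> VH" "u \<noteq> v"
    have e: "{u,v} \<in> EH" using cpl uv unfolding complete_graph_def by blast
    have p: "is_path VH EH [u,v]" unfolding is_path_def using uv e by (auto simp: less_Suc_eq)
    have "path_edges [u,v] \<subseteq> {{u,v}}" by (auto simp: path_edges_def less_Suc_eq)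
    then have "inj_on ?c (path_edges [u,v])" by (rule inj_on_subset[rotated]) simp
    then show "\<exists>xs. is_path VH EH xs \<and> hd xs = u \<and> last xs = v \<and> inj_on ?c (path_edges xs)"
      using p by (intro exI[of _ "[u,v]"]) simp
  qed
  then show "\<exists>c :: 'a set \<Rightarrow> nat. (\<forall>e\<in>EH. c e < 1) \<and>
     (\<forall>u\<in>VH. \<forall>v\<in>VH. u \<noteq> v \<longrightarrow>
        (\<exists>xs. is_path VH EH xs \<and> hd xs = u \<and> last xs = v \<and> inj_on c (path_edges xs)))"
    by (intro exI[of _ ?c]) simp
next
  fix y assume "\<exists>c :: 'a set \<Rightarrow> nat. (\<forall>e\<in>EH. c e < y) \<and>
     (\<forall>u\<in>VH. \<forall>v\<in>VH. u \<noteq> v \<longrightarrow>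
        (\<exists>xs. is_path VH EH xs \<and> hd xs = u \<and> last xs = v \<and> inj_on c (path_edges xs)))"
  then obtain c :: "'a set \<Rightarrow> nat" where c: "\<forall>e\<in>EH. c e < y" by blast
  have "VH \<noteq> {}" using c2 by auto
  then obtain h where h: "h \<in> VH" by blast
  obtain h' where h': "h' \<in> VH" "h' \<noteq> h" using other_ex[OF c2 h] by blast
  have "{h,h'} \<in> EH" using cpl h h' unfolding complete_graph_def by metis
  then have "c {h,h'} < y" using c by blast
  then show "1 \<le> y" by simp
qed

lemma diam_attained:
  assumes fin: "finite VG" and ne: "VG \<noteq> {}"
  shows "\<exists>u\<in>VG. \<exists>v\<in>VG. gdist VG EG u v = diam VG EG"
proof -
  define D where "D = {gdist VG EG u v | u v. u \<in> VG \<and> v \<in> VG}"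
  have "D \<subseteq> (\<lambda>p. gdist VG EG (fst p) (snd p)) ` (VG \<times> VG)"
  proof
    fix x assume "x \<in> D"
    then obtain u v where "x = gdist VG EG u v" "u \<in> VG" "v \<in> VG" unfolding D_def by blast
    then show "x \<in> (\<lambda>p. gdist VG EG (fst p) (snd p)) ` (VG \<times> VG)"
      by (intro image_eqI[of _ _ "(u,v)"]) auto
  qed
  moreover have "finite ((\<lambda>p. gdist VG EG (fst p) (snd p)) ` (VG \<times> VG))" using fin by simp
  ultimately have "finite D" by (rule finite_subset)
  moreover have "D \<noteq> {}" using ne unfolding D_def by blast
  ultimately have "Max D \<in> D" by (rule Max_in)
  then obtain u v where uv: "Max D = gdist VG EG u v" "u \<in> VG" "v \<in> VG"
    unfolding D_def by blast
  have "diam VG EG = Max D" unfolding diam_def D_def by simp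
  then show ?thesis using uv by metis
qed

theorem theorem7:
  fixes VG :: "'a set" and EG :: "'a set set" and VH :: "'b set" and EH :: "'b set set"
  assumes "sgraph VG EG" and "gconnected VG EG" and "card VG \<ge> 3"
    and "sgraph VH EH" and "gconnected VH EH" and "card VH \<ge> 2"
    and "\<not> complete_graph VG EG \<or> \<not> complete_graph VH EH"
  shows "rx3 (VG \<times> VH) (lex_edges VG EG VH EH) \<le> rx3 VG EG + rc VH EH \<and>
    (diam VG EG = rx3 VG EG \<and> complete_graph VH EH \<longrightarrow>
       rx3 (VG \<times> VH) (lex_edges VG EG VH EH) = rx3 VG EG + rc VH EH)"
proof -
  note sG = assms(1) and cG = assms(2) and c3 = assms(3) and sH = assms(4) and cH = assms(5)
    and h2 = assms(6)
  obtain c where c: "\<forall>e\<in>EG. c e < rx3 VG EG" "\<forall>S. S \<subseteq> VG \<and> card S = 3 \<longrightarrow>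
        (\<exists>TV TE. TV \<subseteq> VG \<and> TE \<subseteq> EG \<and> is_tree TV TE \<and> S \<subseteq> TV \<and> inj_on c TE)"
    using rx3_wit[OF sG cG] by blast
  obtain c' where c': "\<forall>e\<in>EH. c' e < rc VH EH" "\<forall>u\<in>VH. \<forall>v\<in>VH. u \<noteq> v \<longrightarrow>
        (\<exists>xs. is_path VH EH xs \<and> hd xs = u \<and> last xs = v \<and> inj_on c' (path_edges xs))"
    using rc_wit[OF sH cH] by blast
  have k2: "rx3 VG EG \<ge> 2" using rx3_ge2[OF sG cG c3] .
  interpret LX VG EG VH EH "rx3 VG EG" c "rc VH EH" c'
    by (unfold_locales) (use sG cG c3 sH cH h2 k2 c c' in auto)
  have valid: "\<exists>C :: ('a \<times> 'b) set \<Rightarrow> nat. (\<forall>e\<in>LE. C e < rx3 VG EG + rc VH EH) \<and>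
     (\<forall>S. S \<subseteq> VG \<times> VH \<and> card S = 3 \<longrightarrow>
        (\<exists>TV TE. TV \<subseteq> VG \<times> VH \<and> TE \<subseteq> LE \<and> is_tree TV TE \<and> S \<subseteq> TV \<and> inj_on C TE))"
    using prod_valid by blast
  have upper: "rx3 (VG \<times> VH) LE \<le> rx3 VG EG + rc VH EH"
    unfolding rx3_def[of "VG \<times> VH" LE] by (rule Least_le) (rule valid)
  have eq: "rx3 (VG \<times> VH) LE = rx3 VG EG + rc VH EH"
    if dm: "diam VG EG = rx3 VG EG" and cpl: "complete_graph VH EH"
  proof -
    have rc1: "rc VH EH = 1" using rc_complete[OF cpl h2] .
    have finG: "finite VG" using sG by (simp add: sgraph_def)
    have neG: "VG \<noteq> {}" using c3 by auto
    obtain u v where uv: "u \<in> VG" "v \<in> VG" "gdist VG EG u v = diam VG EG"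
      using diam_attained[OF finG neG] by blast
    have "u \<noteq> v"
    proof
      assume "u = v"
      have "is_path VG EG [u]" using uv by (simp add: is_path_def)
      then have "gdist VG EG u u \<le> 0" using gdist_le[of VG EG "[u]" u u] by simp
      then show False using \<open>u = v\<close> uv(3) dm k2 by simp
    qed
    have "VH \<noteq> {}" using h2 by auto
    then obtain h where h: "h \<in> VH" by blast
    obtain h' where h': "h' \<in> VH" "h' \<noteq> h" using other_ex[OF h2 h] by blast
    have ex: "\<exists>K::nat. \<exists>C :: ('a \<times> 'b) set \<Rightarrow> nat. (\<forall>e\<in>LE. C e < K) \<and>
       (\<forall>S. S \<subseteq> VG \<times> VH \<and> card S = 3 \<longrightarrow>
        (\<exists>TV TE. TV \<subseteq> VG \<times> VH \<and> TE \<subseteq> LE \<and> is_tree TV TE \<and> S \<subseteq> TV \<and> inj_on C TE))"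
      using valid by (rule exI)
    have "\<exists>C. (\<forall>e\<in>LE. C e < rx3 (VG \<times> VH) LE) \<and> (\<forall>S. S \<subseteq> VG \<times> VH \<and> card S = 3 \<longrightarrow>
        (\<exists>TV TE. TV \<subseteq> VG \<times> VH \<and> TE \<subseteq> LE \<and> is_tree TV TE \<and> S \<subseteq> TV \<and> inj_on C TE))"
      unfolding rx3_def[of "VG \<times> VH" LE] by (rule LeastI_ex[OF ex])
    then obtain C where C: "\<forall>e\<in>LE. C e < rx3 (VG \<times> VH) LE" "\<forall>S. S \<subseteq> VG \<times> VH \<and> card S = 3 \<longrightarrow>
        (\<exists>TV TE. TV \<subseteq> VG \<times> VH \<and> TE \<subseteq> LE \<and> is_tree TV TE \<and> S \<subseteq> TV \<and> inj_on C TE)"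
      by (elim exE conjE)
    have "gdist VG EG u v + 1 \<le> rx3 (VG \<times> VH) LE"
      using lower_bound[OF sG sH uv(1,2) \<open>u \<noteq> v\<close> h h'(1) h'(2)[symmetric] C(1) C(2)] .
    then show ?thesis using upper uv(3) dm rc1 by simp
  qed
  show ?thesis using upper eq by blast
qed


end
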